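(* Let $U=U(\mathrm{Vir};v,2)$ and $P=\mathrm{gr}\,U$ its associated graded Poisson conformal algebra. Then $P$ is a free $H$-module with basis the classes of $(L_0)^nv$, $n\ge0$ (where $L_0u=v_{(0)}u$), and the $H$-linear map sending the class of $(L_0)^nv$ to $v^{n+1}$ is an isomorphism of Poisson conformal algebras from $P$ onto $PV_2$.
   Context: $\Bbbk$ is a field of characteristic $0$, $H=\Bbbk[\partial]$; $\lambda$-products $(x_\lambda y)=\sum_n\frac{\lambda^n}{n!}(x_{(n)}y)$ satisfy $(\partial x_\lambda y)=-\lambda(x_\lambda y)$, $(x_\lambda\partial y)=(\partial+\lambda)(x_\lambda y)$, and $(x_{-\partial-\lambda}y)=\sum_n\frac{(-\partial-\lambda)^n}{n!}(x_{(n)}y)$. $\mathrm{Vir}=Hv$ with $[v_\lambda v]=(\partial+2\lambda)v$. $U(\mathrm{Vir};v,N)$ is the associative conformal algebra generated by $v$ subject to $(v_{(n)}v)=0$ for $n\ge N$ and $(v_\lambda v)-(v_{-\partial-\lambda}v)=(\partial+2\lambda)v$. $F_nU$ is the $H$-span of the elements $v_{(n_1)}(v_{(n_2)}(\cdots(v_{(n_k)}v)\cdots))$ with $k+1\le n$ factors $v$, $F_0U=0$; $\mathrm{gr}\,U=\bigoplus_{n\ge1}F_nU/F_{n-1}U$ with $(\bar u_\lambda\bar w)=\overline{(u_\lambda w)}$ (in degree $n+m$) and $[\bar u_\lambda\bar w]=\overline{(u_\lambda w)-(w_{-\partial-\lambda}u)}$ (in degree $n+m-1$) for $u\in F_nU$,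 $w\in F_mU$. $PV_2=H\otimes\Bbbk[v]$ is the Poisson conformal algebra with $(v^m{}_\lambda v^n)=v^{n+m}$ and $[v^m{}_\lambda v^n]=(m\partial+(n+m)\lambda)v^{n+m-1}$, extended by sesquilinearity. *)

theory Defs
  imports "HOL-Computational_Algebra.Polynomial"
begin

text \<open>Formal expressions built from the generator v, zero, sums, scalars,
  the derivation and the n-products (Prd n a b stands for a_(n) b).\<close>
datatype 'k ct = Gen | Zer | Add "'k ct" "'k ct" | Sml 'k "'k ct" | Der "'k ct"
  | Prd nat "'k ct" "'k ct"

definition tsum :: "'k ct list \<Rightarrow> 'k ct" where
  "tsum xs = foldr Add xs Zer"

definition Sub :: "'k::field_char_0 ct \<Rightarrow> 'k ct \<Rightarrow> 'k ct" where
  "Sub x y = Add x (Sml (-1) y)"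

definition ders :: "nat \<Rightarrow> 'k ct \<Rightarrow> 'k ct" where
  "ders i x = (Der ^^ i) x"

definition pact :: "'k::field_char_0 poly \<Rightarrow> 'k ct \<Rightarrow> 'k ct" where
  "pact p x = tsum (map (\<lambda>i. Sml (coeff p i) (ders i x)) [0..<Suc (degree p)])"

text \<open>k! times the coefficient of lambda^k of (v_{-\<partial>-\<lambda>} v), truncated at N
  (the products v_(j) v with j \<ge> N vanish by the defining relations), and of
  (\<partial>+2\<lambda>)v.\<close>
definition virrhs :: "nat \<Rightarrow> 'k::field_char_0 ct" where
  "virrhs k = (if k = 0 then Der Gen else if k = 1 then Sml 2 Gen else Zer)"

text \<open>The congruence defining U(Vir; v, N): axioms of an associative conformal
  algebra (in terms of n-products) plus the defining relations.\<close>
inductive ceq :: "nat \<Rightarrow> 'k::field_char_0 ct \<Rightarrow> 'k ct \<Rightarrow> bool" for N :: nat where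
  refl: "ceq N x x"
| sym: "ceq N x y \<Longrightarrow> ceq N y x"
| trans: "ceq N x y \<Longrightarrow> ceq N y z \<Longrightarrow> ceq N x z"
| cAdd: "ceq N x x' \<Longrightarrow> ceq N y y' \<Longrightarrow> ceq N (Add x y) (Add x' y')"
| cSml: "ceq N x x' \<Longrightarrow> ceq N (Sml a x) (Sml a x')"
| cDer: "ceq N x x' \<Longrightarrow> ceq N (Der x) (Der x')"
| cPrd: "ceq N x x' \<Longrightarrow> ceq N y y' \<Longrightarrow> ceq N (Prd n x y) (Prd n x' y')"
| add_assoc: "ceq N (Add (Add x y) z) (Add x (Add y z))"
| add_comm: "ceq N (Add x y) (Add y x)"
| add_zero: "ceq N (Add Zer x) x"
| sml_one: "ceq N (Sml 1 x) x"
| sml_zero: "ceq N (Sml 0 x) Zer"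
| sml_sml: "ceq N (Sml a (Sml b x)) (Sml (a * b) x)"
| sml_distl: "ceq N (Sml (a + b) x) (Add (Sml a x) (Sml b x))"
| sml_distr: "ceq N (Sml a (Add x y)) (Add (Sml a x) (Sml a y))"
| der_add: "ceq N (Der (Add x y)) (Add (Der x) (Der y))"
| der_sml: "ceq N (Der (Sml a x)) (Sml a (Der x))"
| prd_addl: "ceq N (Prd n (Add x y) z) (Add (Prd n x z) (Prd n y z))"
| prd_addr: "ceq N (Prd n x (Add y z)) (Add (Prd n x y) (Prd n x z))"
| prd_smll: "ceq N (Prd n (Sml a x) y) (Sml a (Prd n x y))"
| prd_smlr: "ceq N (Prd n x (Sml a y)) (Sml a (Prd n x y))"
| prd_derl: "ceq N (Prd n (Der x) y) (Sml (- of_nat n) (Prd (n - 1) x y))"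
| prd_derr: "ceq N (Prd n x (Der y)) (Add (Der (Prd n x y)) (Sml (of_nat n) (Prd (n - 1) x y)))"
| prd_assoc: "ceq N (Prd n x (Prd m y z))
     (tsum (map (\<lambda>j. Sml (of_nat (n choose j)) (Prd (m + n - j) (Prd j x y) z)) [0..<Suc n]))"
| rel_loc: "n \<ge> N \<Longrightarrow> ceq N (Prd n Gen Gen) Zer"
| rel_vir: "ceq N (Sub (Prd k Gen Gen)
     (tsum (map (\<lambda>j. Sml ((-1) ^ j / fact (j - k)) (ders (j - k) (Prd j Gen Gen))) [k..<N])))
     (virrhs k)"

primrec mono :: "nat list \<Rightarrow> 'k ct" where
  "mono [] = Gen"
| "mono (n # ns) = Prd n Gen (mono ns)"

text \<open>x lies in F_n U: x is (in U) an H-linear combination of monomials with at most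
  n factors v.\<close>
definition inF :: "nat \<Rightarrow> nat \<Rightarrow> 'k::field_char_0 ct \<Rightarrow> bool" where
  "inF N n x \<longleftrightarrow> (\<exists>L :: ('k \<times> nat \<times> nat list) list.
      (\<forall>(c, i, ns) \<in> set L. length ns < n) \<and>
      ceq N x (tsum (map (\<lambda>(c, i, ns). Sml c (ders i (mono ns))) L)))"

text \<open>(L_0)^n v = v_(0)(v_(0)(... v)).\<close>
definition L0v :: "nat \<Rightarrow> 'k ct" where
  "L0v n = mono (replicate n 0)"

text \<open>Polynomials in \<partial> with coefficients in k; polynomials in \<lambda> with coefficients
  in k[\<partial>] are 'k poly poly (outer variable \<lambda>).  psub p s = p(s).\<close>
definition psub :: "'k::field_char_0 poly \<Rightarrow> 'k poly poly \<Rightarrow> 'k poly poly" where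
  "psub p s = poly (map_poly (\<lambda>c. [:[:c:]:]) p) s"

text \<open>(p(\<partial>)v^n _\<lambda> q(\<partial>)v^m) = p(-\<lambda>) q(\<partial>+\<lambda>) v^(n+m).\<close>
definition pvprod :: "'k::field_char_0 poly \<Rightarrow> 'k poly \<Rightarrow> 'k poly poly" where
  "pvprod p q = psub p [:0, -1:] * psub q [:[:0, 1:], 1:]"

text \<open>[p(\<partial>)v^n _\<lambda> q(\<partial>)v^m] = p(-\<lambda>) q(\<partial>+\<lambda>) (n\<partial> + (n+m)\<lambda>) v^(n+m-1).\<close>
definition pvbr :: "nat \<Rightarrow> nat \<Rightarrow> 'k::field_char_0 poly \<Rightarrow> 'k poly \<Rightarrow> 'k poly poly" where
  "pvbr n m p q = pvprod p q * [:[:0, of_nat n:], [:of_nat (n + m):]:]"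

text \<open>k! times the coefficient of \<lambda>^k in (u_\<lambda> w) - (w_{-\<partial>-\<lambda>} u), where the sum
  over j is truncated at a bound B beyond which w_(j) u vanishes.\<close>
definition brk :: "nat \<Rightarrow> nat \<Rightarrow> 'k::field_char_0 ct \<Rightarrow> 'k ct \<Rightarrow> 'k ct" where
  "brk k B u w = Sub (Prd k u w)
     (tsum (map (\<lambda>j. Sml ((-1) ^ j / fact (j - k)) (ders (j - k) (Prd j w u))) [k..<B]))"

end

theory Submission
  imports Defs
begin


lemma mp_add: assumes "f 0 = 0" "\<And>a b. f (a + b) = f a + f b"
  shows "map_poly f (p + q) = map_poly f p + map_poly f q"
  by (intro poly_eqI) (simp add: coeff_map_poly assms)

lemma mp_mult: fixes f :: "'a::comm_semiring_1 \<Rightarrow> 'b::comm_semiring_1"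
  assumes "f 0 = 0" "\<And>a b. f (a + b) = f a + f b" "\<And>a b. f (a * b) = f a * f b"
  shows "map_poly f (p * q) = map_poly f p * map_poly f q"
proof (induct p)
  case 0 show ?case by simp
next
  case (pCons a p)
  have "map_poly f (pCons a p * q) = map_poly f (smult a q + pCons 0 (p * q))" by simp
  also have "... = smult (f a) (map_poly f q) + pCons 0 (map_poly f p * map_poly f q)"
    by (simp add: mp_add assms map_poly_smult map_poly_pCons pCons.hyps)
  also have "... = map_poly f (pCons a p) * map_poly f q" by (simp add: map_poly_pCons assms)
  finally show ?case .
qed

lemma psub_pCons: "psub (pCons a p) s = [:[:a:]:] + s * psub p s"
  by (simp add: psub_def map_poly_pCons)
lemma psub_0[simp]: "psub 0 s = 0" by (simp add: psub_def)
lemma psub_const[simp]: "psub [:a:] s = [:[:a:]:]" by (simp add: psub_pCons)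
lemma psub_add: "psub (p + q) s = psub p s + psub q s"
  by (simp add: psub_def mp_add)
lemma psub_mult: "psub (p * q) s = psub p s * psub q s"
  by (simp add: psub_def mp_mult)
lemma psub_1[simp]: "psub 1 s = 1" by (metis psub_const one_pCons)
lemma psub_X: "psub [:0,1:] s = s" using psub_pCons[of 0 "[:1:]" s] by (simp flip: one_pCons)


definition s1 :: "'k::field_char_0 poly \<Rightarrow> 'k poly poly" where "s1 c = psub c [:0,-1:]"
definition s2 :: "'k::field_char_0 poly \<Rightarrow> 'k poly poly" where "s2 c = psub c [:[:0,1:],1:]"
definition br :: "'k::field_char_0 poly poly \<Rightarrow> 'k poly poly \<Rightarrow> 'k poly poly poly" where
 "br U W = map_poly s1 U * pcompose (map_poly s2 W) [:[:0,1:],1:]"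
definition cl :: "nat \<Rightarrow> 'k::field_char_0 poly poly poly \<Rightarrow> 'k poly poly" where
 "cl n P = map_poly (\<lambda>c. coeff c n) P"
definition mPrd :: "nat \<Rightarrow> 'k::field_char_0 poly poly \<Rightarrow> 'k poly poly \<Rightarrow> 'k poly poly" where
 "mPrd n U W = smult [:fact n:] (cl n (br U W))"

lemma s1_0[simp]: "s1 0 = 0" and s1_add: "s1 (a + b) = s1 a + s1 b" and s1_mult: "s1 (a * b) = s1 a * s1 b"
  and s1_const[simp]: "s1 [:c:] = [:[:c:]:]" and s1_X: "s1 [:0,1:] = [:0,-1:]" and s1_1[simp]: "s1 1 = 1"
  by (simp_all add: s1_def psub_add psub_mult psub_X)
lemma s2_0[simp]: "s2 0 = 0" and s2_add: "s2 (a + b) = s2 a + s2 b" and s2_mult: "s2 (a * b) = s2 a * s2 b"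
  and s2_const[simp]: "s2 [:c:] = [:[:c:]:]" and s2_X: "s2 [:0,1:] = [:[:0,1:],1:]" and s2_1[simp]: "s2 1 = 1"
  by (simp_all add: s2_def psub_add psub_mult psub_X)

lemma ms1_add: "map_poly s1 (p + q) = map_poly s1 p + map_poly s1 q" by (rule mp_add) (simp_all add: s1_add)
lemma ms1_mult: "map_poly s1 (p * q) = map_poly s1 p * map_poly s1 q" by (rule mp_mult) (simp_all add: s1_add s1_mult)
lemma ms2_add: "map_poly s2 (p + q) = map_poly s2 p + map_poly s2 q" by (rule mp_add) (simp_all add: s2_add)
lemma ms2_mult: "map_poly s2 (p * q) = map_poly s2 p * map_poly s2 q" by (rule mp_mult) (simp_all add: s2_add s2_mult)

lemma br_addl: "br (U + U') W = br U W + br U' W"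
  by (simp add: br_def ms1_add algebra_simps)
lemma br_addr: "br U (W + W') = br U W + br U W'"
  by (simp add: br_def ms2_add pcompose_add algebra_simps)
lemma ms1_smult: "map_poly s1 (smult a p) = smult (s1 a) (map_poly s1 p)"
  by (rule map_poly_smult) (simp_all add: s1_mult)
lemma ms2_smult: "map_poly s2 (smult a p) = smult (s2 a) (map_poly s2 p)"
  by (rule map_poly_smult) (simp_all add: s2_mult)
lemma br_kl: "br (smult [:c:] U) W = smult [:[:c:]:] (br U W)"
  by (simp add: br_def ms1_smult)
lemma br_kr: "br U (smult [:c:] W) = smult [:[:c:]:] (br U W)"
  by (simp add: br_def ms2_smult pcompose_smult)
lemma br_Dl: "br (smult [:0,1:] U) W = smult [:0,-1:] (br U W)"
  by (simp add: br_def ms1_smult s1_X)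
lemma br_Dr: "br U (smult [:0,1:] W) = smult [:[:0,1:],1:] (br U W)"
  by (simp add: br_def ms2_smult pcompose_smult s2_X)
lemma br_Xl: "br (pCons 0 U) W = pCons 0 (br U W)"
  by (simp add: br_def map_poly_pCons)
lemma br_Xr: "br U (pCons 0 W) = smult [:0,1:] (br U W) + pCons 0 (br U W)"
  by (simp add: br_def map_poly_pCons pcompose_pCons algebra_simps)
lemma br_11: "br 1 1 = 1"
  by (simp add: br_def pcompose_1)


lemma cl_coeff: "coeff (cl n P) i = coeff (coeff P i) n"
  by (simp add: cl_def coeff_map_poly)
lemma cl_add: "cl n (P + Q) = cl n P + cl n Q"
  by (rule poly_eqI) (simp add: cl_coeff)
lemma cl_0[simp]: "cl n 0 = 0"
  by (simp add: cl_def)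
lemma cl_kd: "cl n (smult [:d:] P) = smult d (cl n P)"
  by (rule poly_eqI) (simp add: cl_coeff)
lemma cl_mL: "cl n (smult [:0,-1:] P) = (if n = 0 then 0 else - cl (n-1) P)"
  by (rule poly_eqI) (auto simp add: cl_coeff coeff_pCons split: nat.split)
lemma cl_L: "cl n (smult [:0,1:] P) = (if n = 0 then 0 else cl (n-1) P)"
  by (rule poly_eqI) (auto simp add: cl_coeff coeff_pCons split: nat.split)
lemma cl_DL: "cl n (smult [:[:0,1:],1:] P) = smult [:0,1:] (cl n P) + (if n = 0 then 0 else cl (n-1) P)"
  by (rule poly_eqI) (auto simp add: cl_coeff coeff_pCons algebra_simps split: nat.split)
lemma cl_X: "cl n (pCons 0 P) = pCons 0 (cl n P)"
  by (rule poly_eqI) (simp add: cl_coeff coeff_pCons split: nat.split)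
lemma cl_1: "cl n 1 = (if n = 0 then 1 else 0)"
  by (rule poly_eqI) (simp add: cl_coeff coeff_1)

lemma fact_k: "[:fact (Suc k) :: 'k::field_char_0:] = [:of_nat (Suc k):] * [:fact k:]"
  by simp

lemma smult_negc: "smult [:- (a::'k::comm_ring_1):] p = - smult [:a:] p"
  by (rule poly_eqI) (simp add: smult_minus_left)
lemma smult_one1[simp]: "smult [:1::'k::comm_ring_1:] p = p" by (simp flip: one_pCons)
lemma one_pp: "[:[:1:]:] = 1" by (simp flip: one_pCons)

lemma mP_addl: "mPrd n (U + U') W = mPrd n U W + mPrd n U' W"
  by (simp add: mPrd_def br_addl cl_add smult_add_right)
lemma mP_addr: "mPrd n U (W + W') = mPrd n U W + mPrd n U W'"
  by (simp add: mPrd_def br_addr cl_add smult_add_right)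
lemma mP_kl: "mPrd n (smult [:c:] U) W = smult [:c:] (mPrd n U W)"
  by (simp add: mPrd_def br_kl cl_kd mult.commute)
lemma mP_kr: "mPrd n U (smult [:c:] W) = smult [:c:] (mPrd n U W)"
  by (simp add: mPrd_def br_kr cl_kd mult.commute)
lemma mP_Dl: "mPrd n (smult [:0,1:] U) W = smult [:- of_nat n:] (mPrd (n-1) U W)"
  by (cases n) (simp_all add: mPrd_def br_Dl cl_mL algebra_simps flip: smult_negc)
lemma mP_Dr: "mPrd n U (smult [:0,1:] W) = smult [:0,1:] (mPrd n U W) + smult [:of_nat n:] (mPrd (n-1) U W)"
  by (cases n) (simp_all add: mPrd_def br_Dr cl_DL smult_add_right mult.commute mult.left_commute)
lemma mP_Xl: "mPrd n (pCons 0 U) W = pCons 0 (mPrd n U W)"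
  by (simp add: mPrd_def br_Xl cl_X)
lemma mP_Xr: "mPrd n U (pCons 0 W) = pCons 0 (mPrd n U W) + smult [:of_nat n:] (mPrd (n-1) U W)"
  by (cases n) (simp_all add: mPrd_def br_Xr cl_add cl_X cl_L smult_add_right mult.commute)
lemma mP_11: "mPrd n 1 1 = (if n = 0 then 1 else 0)"
  by (simp add: mPrd_def br_11 cl_1 one_pp)
lemma mP_0l[simp]: "mPrd n 0 W = 0"
  by (simp add: mPrd_def br_def)
lemma mP_0r[simp]: "mPrd n U 0 = 0"
  by (simp add: mPrd_def br_def)


type_synonym 'k M = "'k poly poly"

lemma smult_sumr: "smult a (sum f A) = (\<Sum>x\<in>A. smult a (f x))"
  by (induct A rule: infinite_finite_induct) (simp_all add: smult_add_right)
lemma pCons0_sum: "(\<Sum>x\<in>A. pCons 0 (f x)) = pCons 0 (sum f A)"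
  by (induct A rule: infinite_finite_induct) simp_all
lemma mP_suml: "mPrd n (sum f A) W = (\<Sum>x\<in>A. mPrd n (f x) W)"
  by (induct A rule: infinite_finite_induct) (simp_all add: mP_addl)
lemma mP_sumr: "mPrd n U (sum f A) = (\<Sum>x\<in>A. mPrd n U (f x))"
  by (induct A rule: infinite_finite_induct) (simp_all add: mP_addr)
lemma smult_kk: "smult [:a::'k::comm_ring_1:] (smult [:b:] x) = smult [:a * b:] x"
  by (simp add: mult.commute)

lemma M_induct:
  fixes P :: "'k::field_char_0 M \<Rightarrow> bool"
  assumes one: "P 1" and k: "\<And>c U. P U \<Longrightarrow> P (smult [:c:] U)" and add: "\<And>U V. P U \<Longrightarrow> P V \<Longrightarrow> P (U + V)"
    and X: "\<And>U. P U \<Longrightarrow> P (pCons 0 U)" and D: "\<And>U. P U \<Longrightarrow> P (smult [:0,1:] U)"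
  shows "P U"
proof -
  have c: "P [:c:]" for c :: "'k poly"
  proof (induct c)
    case 0 have "P (smult [:0:] 1)" by (rule k[OF one]) thus ?case by simp
  next
    case (pCons a c)
    have "[:pCons a c:] = smult [:a:] 1 + smult [:0,1:] [:c:]" by (simp add: one_pCons)
    then show ?case using add[OF k[OF one] D[OF pCons(2)]] by simp
  qed
  show ?thesis
  proof (induct U)
    case 0 show ?case using c[of 0] by simp
  next
    case (pCons c U)
    have "pCons c U = [:c:] + pCons 0 U" by simp
    then show ?case using add[OF c X[OF pCons(2)]] by simp
  qed
qed

lemma S1:
  fixes h :: "nat \<Rightarrow> 'k::field_char_0 M"
  shows "(\<Sum>j<Suc n. smult [:of_nat (j * (n choose j)):] (h j)) =
     smult [:of_nat n:] (\<Sum>i<n. smult [:of_nat (n - 1 choose i):] (h (Suc i)))"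
proof (cases n)
  case 0 then show ?thesis by simp
next
  case (Suc k)
  have "(\<Sum>j<Suc n. smult [:of_nat (j * (n choose j)):] (h j)) =
        (\<Sum>i<n. smult [:of_nat (Suc i * (n choose Suc i)):] (h (Suc i)))"
    by (subst sum.lessThan_Suc_shift) simp
  also have "... = (\<Sum>i<n. smult [:of_nat n:] (smult [:of_nat (n - 1 choose i):] (h (Suc i))))"
  proof (rule sum.cong)
    fix i
    have e: "Suc i * (n choose Suc i) = n * (n - 1 choose i)" using Suc Suc_times_binomial[of i k] by simp
    show "smult [:of_nat (Suc i * (n choose Suc i)):] (h (Suc i)) =
      smult [:of_nat n:] (smult [:of_nat (n - 1 choose i):] (h (Suc i)))"
      by (simp only: e smult_kk of_nat_mult)
  qed simp
  finally show ?thesis by (simp add: smult_sumr)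
qed

lemma S2:
  fixes g :: "nat \<Rightarrow> 'k::field_char_0 M"
  shows "(\<Sum>j<Suc n. smult [:of_nat ((n - j) * (n choose j)):] (g j)) =
     smult [:of_nat n:] (\<Sum>i<n. smult [:of_nat (n - 1 choose i):] (g i))"
proof -
  have "(\<Sum>j<Suc n. smult [:of_nat ((n - j) * (n choose j)):] (g j)) =
        (\<Sum>j<n. smult [:of_nat ((n - j) * (n choose j)):] (g j))"
    by simp
  also have "... = (\<Sum>i<n. smult [:of_nat n:] (smult [:of_nat (n - 1 choose i):] (g i)))"
  proof (rule sum.cong)
    fix i
    have e: "(n - i) * (n choose i) = n * (n - 1 choose i)" by (rule binomial_absorb_comp)
    show "smult [:of_nat ((n - i) * (n choose i)):] (g i) =
      smult [:of_nat n:] (smult [:of_nat (n - 1 choose i):] (g i))"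
      by (simp only: e smult_kk of_nat_mult)
  qed simp
  finally show ?thesis by (simp add: smult_sumr)
qed


definition R :: "'k::field_char_0 M \<Rightarrow> 'k M \<Rightarrow> 'k M \<Rightarrow> nat \<Rightarrow> nat \<Rightarrow> 'k M" where
  "R U W Z n m = (\<Sum>j<Suc n. smult [:of_nat (n choose j):] (mPrd (m + n - j) (mPrd j U W) Z))"
definition AS :: "'k::field_char_0 M \<Rightarrow> 'k M \<Rightarrow> 'k M \<Rightarrow> bool" where
  "AS U W Z \<longleftrightarrow> (\<forall>n m. mPrd n U (mPrd m W Z) = R U W Z n m)"

lemma AS_add1: "AS U W Z \<Longrightarrow> AS U' W Z \<Longrightarrow> AS (U + U') W Z"
  by (simp add: AS_def R_def mP_addl mP_addr smult_add_right sum.distrib)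
lemma AS_add2: "AS U W Z \<Longrightarrow> AS U W' Z \<Longrightarrow> AS U (W + W') Z"
  by (simp add: AS_def R_def mP_addl mP_addr smult_add_right sum.distrib)
lemma AS_add3: "AS U W Z \<Longrightarrow> AS U W Z' \<Longrightarrow> AS U W (Z + Z')"
  by (simp add: AS_def R_def mP_addl mP_addr smult_add_right sum.distrib)
lemma R_k1: "R (smult [:c:] U) W Z n m = smult [:c:] (R U W Z n m)"
  unfolding R_def smult_sumr by (rule sum.cong) (simp_all add: mP_kl mP_kr mult.commute)
lemma R_k2: "R U (smult [:c:] W) Z n m = smult [:c:] (R U W Z n m)"
  unfolding R_def smult_sumr by (rule sum.cong) (simp_all add: mP_kl mP_kr mult.commute)
lemma R_k3: "R U W (smult [:c:] Z) n m = smult [:c:] (R U W Z n m)"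
  unfolding R_def smult_sumr by (rule sum.cong) (simp_all add: mP_kl mP_kr mult.commute)
lemma AS_k1: "AS U W Z \<Longrightarrow> AS (smult [:c:] U) W Z"
  by (simp add: AS_def R_k1 mP_kl mP_kr)
lemma AS_k2: "AS U W Z \<Longrightarrow> AS U (smult [:c:] W) Z"
  by (simp add: AS_def R_k2 mP_kl mP_kr)
lemma AS_k3: "AS U W Z \<Longrightarrow> AS U W (smult [:c:] Z)"
  by (simp add: AS_def R_k3 mP_kl mP_kr)
lemma AS_X1: "AS U W Z \<Longrightarrow> AS (pCons 0 U) W Z"
  by (simp add: AS_def R_def mP_Xl pCons0_sum)

lemma AS_D1: assumes "AS U W Z" shows "AS (smult [:0,1:] U) W Z"
  unfolding AS_def
proof (intro allI)
  fix n m
  let ?h = "\<lambda>j. mPrd (m + n - j) (mPrd (j - 1) U W) Z"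
  have "R (smult [:0,1:] U) W Z n m = (\<Sum>j<Suc n. smult [:- 1:] (smult [:of_nat (j * (n choose j)):] (?h j)))"
    unfolding R_def by (rule sum.cong) (simp_all add: mP_Dl mP_kl mult.commute)
  also have "... = smult [:- 1:] (smult [:of_nat n:] (\<Sum>i<n. smult [:of_nat (n - 1 choose i):] (?h (Suc i))))"
    by (simp only: S1 flip: smult_sumr)
  also have "... = mPrd n (smult [:0, 1:] U) (mPrd m W Z)"
  proof (cases n)
    case 0 then show ?thesis by (simp add: mP_Dl)
  next
    case (Suc k)
    show ?thesis using assms by (simp add: mP_Dl AS_def R_def Suc)
  qed
  finally show "mPrd n (smult [:0, 1:] U) (mPrd m W Z) = R (smult [:0, 1:] U) W Z n m" by simp
qed

lemma AS_X2: assumes "AS U W Z" shows "AS U (pCons 0 W) Z"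
  unfolding AS_def
proof (intro allI)
  fix n m
  let ?h = "\<lambda>j. mPrd (m + n - j) (mPrd (j - 1) U W) Z"
  have "R U (pCons 0 W) Z n m = (\<Sum>j<Suc n. pCons 0 (smult [:of_nat (n choose j):] (mPrd (m+n-j) (mPrd j U W) Z))
          + smult [:of_nat (j * (n choose j)):] (?h j))"
    unfolding R_def by (rule sum.cong) (simp_all add: mP_Xr mP_addl mP_Xl mP_kl smult_add_right mult.commute)
  also have "... = pCons 0 (R U W Z n m) + (\<Sum>j<Suc n. smult [:of_nat (j * (n choose j)):] (?h j))"
    by (simp only: sum.distrib pCons0_sum R_def)
  also have "... = pCons 0 (R U W Z n m) + smult [:of_nat n:] (\<Sum>i<n. smult [:of_nat (n - 1 choose i):] (?h (Suc i)))"
    by (simp only: S1)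
  also have "... = mPrd n U (mPrd m (pCons 0 W) Z)"
  proof (cases n)
    case 0 then show ?thesis using assms by (simp add: mP_Xl mP_Xr AS_def)
  next
    case (Suc k)
    show ?thesis using assms by (simp add: mP_Xl mP_Xr AS_def R_def Suc)
  qed
  finally show "mPrd n U (mPrd m (pCons 0 W) Z) = R U (pCons 0 W) Z n m" by simp
qed

lemma AS_D2: assumes "AS U W Z" shows "AS U (smult [:0,1:] W) Z"
  unfolding AS_def
proof (intro allI)
  fix n m
  let ?h = "\<lambda>j. mPrd (m + n - j) (mPrd (j - 1) U W) Z"
  let ?g = "\<lambda>j. mPrd (m + n - j - 1) (mPrd j U W) Z"
  let ?A = "\<lambda>j. smult [:of_nat (m * (n choose j)):] (?g j)"
  let ?B = "\<lambda>j. smult [:of_nat ((n - j) * (n choose j)):] (?g j)"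
  let ?C = "\<lambda>j. smult [:of_nat (j * (n choose j)):] (?h j)"
  have "R U (smult [:0,1:] W) Z n m = (\<Sum>j<Suc n. smult [:-1:] (?A j) + smult [:-1:] (?B j) + ?C j)"
    unfolding R_def
  proof (rule sum.cong)
    fix j assume "j \<in> {..<Suc n}"
    then have j: "j \<le> n" by simp
    then have e: "(of_nat (m + n - j) :: 'a) = of_nat m + of_nat (n - j)" by (simp add: of_nat_diff)
    show "smult [:of_nat (n choose j):] (mPrd (m + n - j) (mPrd j U (smult [:0, 1:] W)) Z) =
       smult [:-1:] (?A j) + smult [:-1:] (?B j) + ?C j"
      by (simp add: mP_Dr mP_addl mP_Dl mP_kl smult_add_right e of_nat_diff[OF j] algebra_simps flip: smult_negc smult_add_left)
  qed simp
  also have "... = smult [:-1:] (\<Sum>j<Suc n. ?A j) + smult [:-1:] (\<Sum>j<Suc n. ?B j) + (\<Sum>j<Suc n. ?C j)"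
    by (simp only: sum.distrib smult_sumr)
  also have "(\<Sum>j<Suc n. ?B j) = (\<Sum>j<Suc n. ?C j)"
    by (simp only: S1 S2) (simp add: algebra_simps)
  also have "smult [:-1:] (\<Sum>j<Suc n. ?A j) + smult [:-1:] (\<Sum>j<Suc n. ?C j) + (\<Sum>j<Suc n. ?C j)
     = smult [:-1:] (\<Sum>j<Suc n. ?A j)"
    by (simp add: smult_negc del: sum.lessThan_Suc)
  also have "... = smult [:- of_nat m:] (\<Sum>j<Suc n. smult [:of_nat (n choose j):] (?g j))"
    by (simp add: smult_sumr smult_negc mult.commute del: sum.lessThan_Suc)
  also have "... = mPrd n U (mPrd m (smult [:0,1:] W) Z)"
  proof (cases m)
    case 0 then show ?thesis by (simp add: mP_Dl)
  next
    case (Suc k)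
    show ?thesis using assms by (simp add: mP_Dl mP_kr AS_def R_def Suc)
  qed
  finally show "mPrd n U (mPrd m (smult [:0,1:] W) Z) = R U (smult [:0,1:] W) Z n m" by simp
qed

lemma AS_E3:
  fixes E :: "'k::field_char_0 M \<Rightarrow> 'k M"
  assumes E_add: "\<And>a b. E (a + b) = E a + E b" and E_k: "\<And>c a. E (smult [:c:] a) = smult [:c:] (E a)"
  and E_r: "\<And>k A B. mPrd k A (E B) = E (mPrd k A B) + smult [:of_nat k:] (mPrd (k-1) A B)"
  and as: "AS U W Z" shows "AS U W (E Z)"
  unfolding AS_def
proof (intro allI)
  fix n m
  have E0: "E 0 = 0" using E_add[of 0 0] by simp
  have E_sum: "E (sum f A) = (\<Sum>x\<in>A. E (f x))" for f and A :: "nat set"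
    by (induct A rule: infinite_finite_induct) (simp_all add: E0 E_add)
  let ?T = "\<lambda>j. mPrd (m + n - j) (mPrd j U W) Z"
  let ?g = "\<lambda>j. mPrd (m + n - j - 1) (mPrd j U W) Z"
  have "R U W (E Z) n m = (\<Sum>j<Suc n. E (smult [:of_nat (n choose j):] (?T j)) +
     (smult [:of_nat m:] (smult [:of_nat (n choose j):] (?g j)) + smult [:of_nat ((n - j) * (n choose j)):] (?g j)))"
    unfolding R_def
  proof (rule sum.cong)
    fix j assume "j \<in> {..<Suc n}"
    then have j: "j \<le> n" by simp
    then have e: "(of_nat (m + n - j) :: 'k) = of_nat m + of_nat (n - j)" by (simp add: of_nat_diff)
    show "smult [:of_nat (n choose j):] (mPrd (m + n - j) (mPrd j U W) (E Z)) =
      E (smult [:of_nat (n choose j):] (?T j)) +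
     (smult [:of_nat m:] (smult [:of_nat (n choose j):] (?g j)) + smult [:of_nat ((n - j) * (n choose j)):] (?g j))"
      by (simp add: E_r E_k e of_nat_diff[OF j] smult_add_right algebra_simps flip: smult_add_left)
  qed simp
  also have "... = E (R U W Z n m) + smult [:of_nat m:] (\<Sum>j<Suc n. smult [:of_nat (n choose j):] (?g j))
      + (\<Sum>j<Suc n. smult [:of_nat ((n - j) * (n choose j)):] (?g j))"
    by (simp only: sum.distrib E_sum R_def smult_sumr add.assoc)
  also have "... = E (R U W Z n m) + smult [:of_nat m:] (\<Sum>j<Suc n. smult [:of_nat (n choose j):] (?g j))
      + smult [:of_nat n:] (\<Sum>i<n. smult [:of_nat (n - 1 choose i):] (?g i))"
    by (simp only: S2)
  also have "smult [:of_nat m:] (\<Sum>j<Suc n. smult [:of_nat (n choose j):] (?g j)) = smult [:of_nat m:] (R U W Z n (m - 1))"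
  proof (cases m)
    case 0 then show ?thesis by simp
  next
    case (Suc k) then show ?thesis by (simp add: R_def del: sum.lessThan_Suc)
  qed
  also have "smult [:of_nat n:] (\<Sum>i<n. smult [:of_nat (n - 1 choose i):] (?g i)) = smult [:of_nat n:] (R U W Z (n - 1) m)"
  proof (cases n)
    case 0 then show ?thesis by simp
  next
    case (Suc k) then show ?thesis by (simp add: R_def del: sum.lessThan_Suc)
  qed
  also have "E (R U W Z n m) + smult [:of_nat m:] (R U W Z n (m - 1)) + smult [:of_nat n:] (R U W Z (n - 1) m)
     = mPrd n U (mPrd m W (E Z))"
    using as by (simp add: AS_def E_r mP_addr mP_kr)
  finally show "mPrd n U (mPrd m W (E Z)) = R U W (E Z) n m" by simp
qed

lemma AS_111: "AS 1 1 1"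
  unfolding AS_def R_def
proof (intro allI)
  fix n m :: nat
  show "mPrd n 1 (mPrd m 1 1) = (\<Sum>j<Suc n. smult [:of_nat (n choose j):] (mPrd (m + n - j) (mPrd j 1 1) (1::'a M)))"
  proof (cases n)
    case 0 then show ?thesis by (simp add: mP_11)
  next
    case (Suc k)
    have "(\<Sum>j<Suc n. smult [:of_nat (n choose j):] (mPrd (m + n - j) (mPrd j 1 1) (1::'a M))) =
       (\<Sum>j<Suc n. if j = 0 then mPrd (m + n) 1 1 else 0)"
      by (rule sum.cong) (simp_all add: mP_11)
    also have "... = 0" using Suc by (simp add: mP_11)
    finally show ?thesis using Suc by (simp add: mP_11)
  qed
qed

lemma AS_all: "AS U W (Z :: 'k::field_char_0 M)"
proof -
  have E_X: "\<And>k A B. mPrd k A (pCons 0 B) = pCons 0 (mPrd k A B) + smult [:of_nat k:] (mPrd (k-1) A B)"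
    by (rule mP_Xr)
  have E_D: "\<And>k A B. mPrd k A (smult [:0,1:] B) = smult [:0,1:] (mPrd k A B) + smult [:of_nat k:] (mPrd (k-1) A B)"
    by (rule mP_Dr)
  have a3: "AS 1 1 Z" for Z :: "'k M"
  proof (induct Z rule: M_induct)
    case 1 show ?case by (rule AS_111)
  next
    case (2 c U) then show ?case by (rule AS_k3)
  next
    case (3 U V) then show ?case by (rule AS_add3)
  next
    case (4 U) show ?case by (rule AS_E3[where E="pCons 0", OF _ _ E_X 4]) (simp_all add: smult_pCons)
  next
    case (5 U) show ?case by (rule AS_E3[where E="smult [:0,1:]", OF _ _ E_D 5]) (simp_all add: smult_add_right mult.commute)
  qed
  have a2: "AS 1 W Z" for W Z :: "'k M"
  proof (induct W rule: M_induct)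
    case 1 show ?case by (rule a3)
  next
    case (2 c U) then show ?case by (rule AS_k2)
  next
    case (3 U V) then show ?case by (rule AS_add2)
  next
    case (4 U) then show ?case by (rule AS_X2)
  next
    case (5 U) then show ?case by (rule AS_D2)
  qed
  show ?thesis
  proof (induct U rule: M_induct)
    case 1 show ?case by (rule a2)
  next
    case (2 c U) then show ?case by (rule AS_k1)
  next
    case (3 U V) then show ?case by (rule AS_add1)
  next
    case (4 U) then show ?case by (rule AS_X1)
  next
    case (5 U) then show ?case by (rule AS_D1)
  qed
qed


fun ev :: "'k::field_char_0 ct \<Rightarrow> 'k M" where
  "ev Gen = pCons 0 1"
| "ev Zer = 0"
| "ev (Add a b) = ev a + ev b"
| "ev (Sml c a) = smult [:c:] (ev a)"
| "ev (Der a) = smult [:0,1:] (ev a)"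
| "ev (Prd n a b) = mPrd n (ev a) (ev b)"

lemma ev_tsum: "ev (tsum xs) = sum_list (map ev xs)"
  by (induct xs) (simp_all add: tsum_def)
lemma ev_Sub: "ev (Sub a b) = ev a - ev b"
  by (simp add: Sub_def smult_negc)
lemma ev_ders: "ev (ders i x) = smult ([:0,1:]^i) (ev x)"
  by (induct i) (simp_all add: ders_def)
lemma sum_list_upt: "sum_list (map f [a..<b]) = (\<Sum>j\<in>{a..<b}. f j)"
  by (induct b) simp_all
lemma X_eq: "[:0,1:] = pCons 0 (1::'k::field_char_0 M)"
  by (simp add: one_pCons)

lemma mP_XX: "mPrd n (pCons 0 1) (pCons 0 (1::'k::field_char_0 M)) = (if n = 0 then pCons 0 (pCons 0 1) else if n = 1 then pCons 0 1 else 0)"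
  by (simp add: mP_Xl mP_Xr mP_11 one_pp)
lemma c2: "1 - [:-1:] = [:2::'k::field_char_0:]"
  by (rule poly_eqI) (auto simp: coeff_pCons coeff_1 split: nat.split)
lemma c2M: "1 - [:[:-1:]:] = [:[:2::'k::field_char_0:]:]"
  by (rule poly_eqI) (auto simp: coeff_pCons coeff_1 c2 split: nat.split)

lemma smult_cadd: "smult [:a + b:] (x::'k::field_char_0 M) = smult [:a:] x + smult [:b:] x"
  by (rule poly_eqI) (simp add: smult_add_left)

lemma sound: "ceq 2 s t \<Longrightarrow> ev s = ev (t :: 'k::field_char_0 ct)"
proof (induct rule: ceq.induct)
  case (prd_assoc n x m y z)
  have "ev (Prd n x (Prd m y z)) = R (ev x) (ev y) (ev z) n m"
    using AS_all[of "ev x" "ev y" "ev z"] by (simp add: AS_def)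
  also have "... = ev (tsum (map (\<lambda>j. Sml (of_nat (n choose j)) (Prd (m + n - j) (Prd j x y) z)) [0..<Suc n]))"
    by (simp add: ev_tsum R_def sum_list_upt o_def atLeast0LessThan del: upt_Suc)
  finally show ?case .
next
  case (rel_loc n)
  then show ?case by (simp add: mP_XX)
next
  case (rel_vir k)
  show ?case
  proof (cases "k = 0")
    case True then show ?thesis by (simp add: ev_Sub ev_tsum ev_ders mP_XX virrhs_def numeral_2_eq_2 one_pp)
  next
    case False
    show ?thesis
    proof (cases "k = 1")
      case True then show ?thesis by (simp add: ev_Sub ev_tsum ev_ders mP_XX virrhs_def numeral_2_eq_2 c2 c2M flip: smult_diff_left)
    next
      case False
      with \<open>k \<noteq> 0\<close> have "k \<ge> 2" by simp
      then show ?thesis by (simp add: ev_Sub ev_tsum ev_ders mP_XX virrhs_def)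
    qed
  qed
qed (simp_all add: smult_cadd mP_addl mP_addr mP_kl mP_kr mP_Dl mP_Dr smult_add_right smult_add_left algebra_simps)


declare ceq.trans[trans]

lemma add_zero_r: "ceq N (Add x Zer) x"
  by (meson ceq.add_comm ceq.add_zero ceq.trans)
lemma sml_Zer: "ceq N (Sml c Zer) Zer"
proof -
  have "ceq N (Sml c Zer) (Sml c (Sml 0 Zer))" by (rule ceq.cSml, rule ceq.sym, rule ceq.sml_zero)
  also have "ceq N ... (Sml (c * 0) Zer)" by (rule ceq.sml_sml)
  also have "ceq N ... Zer" using ceq.sml_zero by simp
  finally show ?thesis .
qed
lemma der_Zer: "ceq N (Der Zer) Zer"
proof -
  have "ceq N (Der Zer) (Der (Sml 0 Zer))" by (rule ceq.cDer, rule ceq.sym, rule ceq.sml_zero)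
  also have "ceq N ... (Sml 0 (Der Zer))" by (rule ceq.der_sml)
  also have "ceq N ... Zer" by (rule ceq.sml_zero)
  finally show ?thesis .
qed
lemma prd_Zerl: "ceq N (Prd n Zer y) Zer"
proof -
  have "ceq N (Prd n Zer y) (Prd n (Sml 0 Zer) y)" by (rule ceq.cPrd, rule ceq.sym, rule ceq.sml_zero, rule ceq.refl)
  also have "ceq N ... (Sml 0 (Prd n Zer y))" by (rule ceq.prd_smll)
  also have "ceq N ... Zer" by (rule ceq.sml_zero)
  finally show ?thesis .
qed
lemma prd_Zerr: "ceq N (Prd n x Zer) Zer"
proof -
  have "ceq N (Prd n x Zer) (Prd n x (Sml 0 Zer))" by (rule ceq.cPrd, rule ceq.refl, rule ceq.sym, rule ceq.sml_zero)
  also have "ceq N ... (Sml 0 (Prd n x Zer))" by (rule ceq.prd_smlr)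
  also have "ceq N ... Zer" by (rule ceq.sml_zero)
  finally show ?thesis .
qed

lemma tsum_Nil[simp]: "tsum [] = Zer" and tsum_Cons[simp]: "tsum (x # xs) = Add x (tsum xs)"
  by (simp_all add: tsum_def)

lemma tsum_append: "ceq N (tsum (xs @ ys)) (Add (tsum xs) (tsum ys))"
proof (induct xs)
  case Nil show ?case by simp (rule ceq.sym, rule ceq.add_zero)
next
  case (Cons x xs)
  have "ceq N (tsum ((x # xs) @ ys)) (Add x (Add (tsum xs) (tsum ys)))"
    using Cons by (simp add: ceq.cAdd ceq.refl)
  also have "ceq N ... (Add (Add x (tsum xs)) (tsum ys))" by (rule ceq.sym, rule ceq.add_assoc)
  finally show ?case by simp
qed

lemma tsum_cong: "(\<And>x. x \<in> set xs \<Longrightarrow> ceq N (f x) (g x)) \<Longrightarrow> ceq N (tsum (map f xs)) (tsum (map g xs))"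
  by (induct xs) (simp_all add: ceq.refl ceq.cAdd)

lemma tsum_sml: "ceq N (Sml c (tsum xs)) (tsum (map (Sml c) xs))"
proof (induct xs)
  case Nil show ?case by (simp add: sml_Zer)
next
  case (Cons x xs)
  then show ?case by simp (rule ceq.trans, rule ceq.sml_distr, rule ceq.cAdd, rule ceq.refl)
qed

lemma tsum_der: "ceq N (Der (tsum xs)) (tsum (map Der xs))"
proof (induct xs)
  case Nil show ?case by (simp add: der_Zer)
next
  case (Cons x xs)
  then show ?case by simp (rule ceq.trans, rule ceq.der_add, rule ceq.cAdd, rule ceq.refl)
qed

lemma tsum_prdl: "ceq N (Prd n (tsum xs) y) (tsum (map (\<lambda>x. Prd n x y) xs))"
proof (induct xs)
  case Nil show ?case by (simp add: prd_Zerl)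
next
  case (Cons x xs)
  then show ?case by simp (rule ceq.trans, rule ceq.prd_addl, rule ceq.cAdd, rule ceq.refl)
qed

lemma tsum_prdr: "ceq N (Prd n x (tsum ys)) (tsum (map (\<lambda>y. Prd n x y) ys))"
proof (induct ys)
  case Nil show ?case by (simp add: prd_Zerr)
next
  case (Cons y ys)
  then show ?case by simp (rule ceq.trans, rule ceq.prd_addr, rule ceq.cAdd, rule ceq.refl)
qed

lemma tsum_concat: "ceq N (tsum (concat xss)) (tsum (map tsum xss))"
proof (induct xss)
  case Nil show ?case by (simp add: ceq.refl)
next
  case (Cons xs xss)
  show ?case by simp (rule ceq.trans, rule tsum_append, rule ceq.cAdd, rule ceq.refl, rule Cons)
qed

lemma tsum_zero: "(\<And>x. x \<in> set xs \<Longrightarrow> ceq N x Zer) \<Longrightarrow> ceq N (tsum xs) Zer"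
proof (induct xs)
  case Nil show ?case by (simp add: ceq.refl)
next
  case (Cons x xs)
  have "ceq N (tsum (x # xs)) (Add Zer Zer)" using Cons by (simp add: ceq.cAdd)
  also have "ceq N ... Zer" by (rule ceq.add_zero)
  finally show ?case .
qed

lemma ders_Suc: "ders (Suc i) x = Der (ders i x)"
  by (simp add: ders_def)
lemma ders_0[simp]: "ders 0 x = x"
  by (simp add: ders_def)

lemma prd0_ders: "ceq N (Prd 0 x (ders i y)) (ders i (Prd 0 x y))"
proof (induct i)
  case 0 show ?case by (simp add: ceq.refl)
next
  case (Suc i)
  have "ceq N (Prd 0 x (ders (Suc i) y)) (Add (Der (Prd 0 x (ders i y))) (Sml (of_nat 0) (Prd (0 - 1) x (ders i y))))"
    unfolding ders_Suc by (rule ceq.prd_derr)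
  also have "ceq N ... (Add (Der (Prd 0 x (ders i y))) Zer)"
    by (rule ceq.cAdd, rule ceq.refl) (simp add: ceq.sml_zero)
  also have "ceq N ... (Der (Prd 0 x (ders i y)))" by (rule add_zero_r)
  also have "ceq N ... (ders (Suc i) (Prd 0 x y))" unfolding ders_Suc by (rule ceq.cDer, rule Suc)
  finally show ?case .
qed

lemma assoc0: "ceq N (Prd n (Prd 0 x y) z) (Prd 0 x (Prd n y z))"
proof -
  have "ceq N (Prd 0 x (Prd n y z)) (tsum (map (\<lambda>j. Sml (of_nat (0 choose j)) (Prd (n + 0 - j) (Prd j x y) z)) [0..<Suc 0]))"
    by (rule ceq.prd_assoc)
  also have "ceq N ... (Add (Sml 1 (Prd n (Prd 0 x y) z)) Zer)" by (simp add: ceq.refl)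
  also have "ceq N ... (Sml 1 (Prd n (Prd 0 x y) z))" by (rule add_zero_r)
  also have "ceq N ... (Prd n (Prd 0 x y) z)" by (rule ceq.sml_one)
  finally show ?thesis by (rule ceq.sym)
qed


definition LC :: "('k::field_char_0 \<times> nat \<times> nat) list \<Rightarrow> 'k ct" where
  "LC L = tsum (map (\<lambda>(c, i, a). Sml c (ders i (L0v a))) L)"
definition spn :: "'k::field_char_0 ct \<Rightarrow> bool" where
  "spn t \<longleftrightarrow> (\<exists>L. ceq 2 t (LC L))"

lemma spn_cong: "ceq 2 s t \<Longrightarrow> spn t \<Longrightarrow> spn s"
  unfolding spn_def by (meson ceq.trans)

lemma spn_Zer: "spn Zer"
  unfolding spn_def by (rule exI[of _ "[]"]) (simp add: LC_def ceq.refl)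

lemma spn_L0v: "spn (L0v a)"
  unfolding spn_def
proof (rule exI[of _ "[(1, 0, a)]"])
  have "ceq 2 (L0v a) (Sml 1 (L0v a))" by (rule ceq.sym, rule ceq.sml_one)
  also have "ceq 2 ... (Add (Sml 1 (L0v a)) Zer)" by (rule ceq.sym, rule add_zero_r)
  finally show "ceq 2 (L0v a) (LC [(1, 0, a)])" by (simp add: LC_def)
qed

lemma spn_Gen: "spn Gen"
  using spn_L0v[of 0] by (simp add: L0v_def)

lemma spn_Add: "spn s \<Longrightarrow> spn t \<Longrightarrow> spn (Add s t)"
  unfolding spn_def
proof (elim exE)
  fix L1 L2 assume 1: "ceq 2 s (LC L1)" and 2: "ceq 2 t (LC L2)"
  have "ceq 2 (Add s t) (Add (LC L1) (LC L2))" using 1 2 by (rule ceq.cAdd)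
  also have "ceq 2 ... (LC (L1 @ L2))" unfolding LC_def map_append by (rule ceq.sym, rule tsum_append)
  finally show "\<exists>L. ceq 2 (Add s t) (LC L)" by blast
qed

lemma spn_tsum: "(\<And>x. x \<in> set xs \<Longrightarrow> spn x) \<Longrightarrow> spn (tsum xs)"
  by (induct xs) (simp_all add: spn_Zer spn_Add)

lemma spn_Sml: "spn t \<Longrightarrow> spn (Sml c t)"
  unfolding spn_def
proof (elim exE)
  fix L assume 1: "ceq 2 t (LC L)"
  have "ceq 2 (Sml c t) (Sml c (LC L))" using 1 by (rule ceq.cSml)
  also have "ceq 2 ... (tsum (map (Sml c) (map (\<lambda>(c, i, a). Sml c (ders i (L0v a))) L)))"
    unfolding LC_def by (rule tsum_sml)
  also have "ceq 2 ... (LC (map (\<lambda>(c', i, a). (c * c', i, a)) L))"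
    unfolding LC_def map_map by (rule tsum_cong) (auto simp: ceq.sml_sml)
  finally show "\<exists>L. ceq 2 (Sml c t) (LC L)" by blast
qed

lemma spn_Der: "spn t \<Longrightarrow> spn (Der t)"
  unfolding spn_def
proof (elim exE)
  fix L assume 1: "ceq 2 t (LC L)"
  have "ceq 2 (Der t) (Der (LC L))" using 1 by (rule ceq.cDer)
  also have "ceq 2 ... (tsum (map Der (map (\<lambda>(c, i, a). Sml c (ders i (L0v a))) L)))"
    unfolding LC_def by (rule tsum_der)
  also have "ceq 2 ... (LC (map (\<lambda>(c, i, a). (c, Suc i, a)) L))"
    unfolding LC_def map_map by (rule tsum_cong) (auto simp: ceq.der_sml ders_Suc)
  finally show "\<exists>L. ceq 2 (Der t) (LC L)" by blast
qed

lemma L0v_Suc: "L0v (Suc a) = Prd 0 Gen (L0v a)"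
  by (simp add: L0v_def)

lemma spn_P0: "spn t \<Longrightarrow> spn (Prd 0 Gen t)"
  unfolding spn_def
proof (elim exE)
  fix L assume 1: "ceq 2 t (LC L)"
  have "ceq 2 (Prd 0 Gen t) (Prd 0 Gen (LC L))" using 1 by (rule ceq.cPrd[OF ceq.refl])
  also have "ceq 2 ... (tsum (map (Prd 0 Gen) (map (\<lambda>(c, i, a). Sml c (ders i (L0v a))) L)))"
    unfolding LC_def by (rule tsum_prdr)
  also have "ceq 2 ... (LC (map (\<lambda>(c, i, a). (c, i, Suc a)) L))"
    unfolding LC_def map_map
  proof (rule tsum_cong)
    fix x assume "x \<in> set L"
    obtain c i a where x: "x = (c, i, a)" by (cases x) auto
    have "ceq 2 (Prd 0 Gen (Sml c (ders i (L0v a)))) (Sml c (Prd 0 Gen (ders i (L0v a))))" by (rule ceq.prd_smlr)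
    also have "ceq 2 ... (Sml c (ders i (L0v (Suc a))))" unfolding L0v_Suc by (rule ceq.cSml, rule prd0_ders)
    finally show "ceq 2 ((Prd 0 Gen \<circ> (\<lambda>(c, i, a). Sml c (ders i (L0v a)))) x) (((\<lambda>(c, i, a). Sml c (ders i (L0v a))) \<circ> (\<lambda>(c, i, a). (c, i, Suc a))) x)"
      by (simp add: x)
  qed
  finally show "\<exists>L. ceq 2 (Prd 0 Gen t) (LC L)" by blast
qed

lemma P1: "ceq 2 (Prd 1 Gen Gen) (Gen :: 'k::field_char_0 ct)"
proof -
  let ?P = "Prd 1 Gen Gen :: 'k ct"
  have r: "ceq 2 (Sub ?P (tsum (map (\<lambda>j. Sml ((-1) ^ j / fact (j - 1)) (ders (j - 1) (Prd j Gen Gen))) [1..<2]))) (virrhs 1)"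
    by (rule ceq.rel_vir)
  have e1: "tsum (map (\<lambda>j. Sml ((-1) ^ j / fact (j - 1)) (ders (j - 1) (Prd j Gen Gen))) [1..<2]) = Add (Sml (-1) ?P) Zer"
    by (simp add: numeral_2_eq_2)
  have "ceq 2 (Sml 2 ?P) (Add (Sml 1 ?P) (Sml 1 ?P))"
    using ceq.sml_distl[of 2 1 1 ?P] by simp
  also have "ceq 2 ... (Add ?P (Sml (-1) (Sml (-1) ?P)))"
  proof (rule ceq.cAdd)
    show "ceq 2 (Sml 1 ?P) ?P" by (rule ceq.sml_one)
    have "ceq 2 (Sml (-1) (Sml (-1) ?P)) (Sml ((-1) * (-1)) ?P)" by (rule ceq.sml_sml)
    then show "ceq 2 (Sml 1 ?P) (Sml (-1) (Sml (-1) ?P))" by (simp add: ceq.sym)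
  qed
  also have "ceq 2 ... (Sub ?P (Add (Sml (-1) ?P) Zer))"
    unfolding Sub_def by (rule ceq.cAdd, rule ceq.refl, rule ceq.cSml, rule ceq.sym, rule add_zero_r)
  also have "ceq 2 ... (Sml 2 Gen)" using r[unfolded e1] by (simp add: virrhs_def)
  finally have "ceq 2 (Sml (1/2) (Sml 2 ?P)) (Sml (1/2) (Sml 2 Gen))" by (rule ceq.cSml)
  then have "ceq 2 (Sml 1 ?P) (Sml 1 Gen)"
    by (metis (no_types, lifting) ceq.sml_sml ceq.sym ceq.trans nonzero_eq_divide_eq times_divide_eq_left zero_neq_numeral)
  then show ?thesis by (meson ceq.sml_one ceq.sym ceq.trans)
qed


lemma spn_G: "spn (Prd n Gen (L0v b) :: 'k::field_char_0 ct)"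
proof (induct b arbitrary: n)
  case 0
  show ?case
  proof (cases "n \<ge> 2")
    case True
    then show ?thesis by (simp add: L0v_def) (rule spn_cong[OF ceq.rel_loc[OF True] spn_Zer])
  next
    case False
    then consider "n = 0" | "n = 1" by linarith
    then show ?thesis
    proof cases
      case 1 then show ?thesis using spn_L0v[of 1] by (simp add: L0v_def)
    next
      case 2 then show ?thesis using spn_cong[OF P1 spn_Gen] by (simp add: L0v_def)
    qed
  qed
next
  case (Suc b)
  let ?Z = "L0v b :: 'k ct"
  have "ceq 2 (Prd n Gen (L0v (Suc b))) (tsum (map (\<lambda>j. Sml (of_nat (n choose j)) (Prd (0 + n - j) (Prd j Gen Gen) ?Z)) [0..<Suc n]))"
    unfolding L0v_Suc by (rule ceq.prd_assoc)
  moreover have "spn (tsum (map (\<lambda>j. Sml (of_nat (n choose j)) (Prd (0 + n - j) (Prd j Gen Gen) ?Z)) [0..<Suc n]))"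
  proof (rule spn_tsum)
    fix x assume "x \<in> set (map (\<lambda>j. Sml (of_nat (n choose j)) (Prd (0 + n - j) (Prd j Gen Gen) ?Z)) [0..<Suc n])"
    then obtain j where x: "x = Sml (of_nat (n choose j)) (Prd (n - j) (Prd j Gen Gen) ?Z)" by auto
    have "spn (Prd (n - j) (Prd j Gen Gen) ?Z)"
    proof -
      consider "j = 0" | "j = 1" | "j \<ge> 2" by linarith
      then show ?thesis
      proof cases
        case 1
        then show ?thesis using spn_cong[OF assoc0 spn_P0[OF Suc]] by simp
      next
        case 2
        then show ?thesis using spn_cong[OF ceq.cPrd[OF P1 ceq.refl] Suc] by simp
      next
        case 3
        have "ceq 2 (Prd (n - j) (Prd j Gen Gen) ?Z) (Prd (n - j) Zer ?Z)"
          by (rule ceq.cPrd[OF ceq.rel_loc[OF 3] ceq.refl])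
        also have "ceq 2 ... Zer" by (rule prd_Zerl)
        finally show ?thesis by (rule spn_cong[OF _ spn_Zer])
      qed
    qed
    then show "spn x" unfolding x by (rule spn_Sml)
  qed
  ultimately show ?case by (rule spn_cong)
qed

lemma spn_K: "spn (Prd n (L0v a) (L0v b) :: 'k::field_char_0 ct)"
proof (induct a arbitrary: n)
  case 0 then show ?case using spn_G by (simp add: L0v_def)
next
  case (Suc a)
  show ?case unfolding L0v_Suc by (rule spn_cong[OF assoc0 spn_P0[OF Suc]])
qed

lemma spn_D: "spn (Prd n (ders i (L0v a)) (ders l (L0v b)) :: 'k::field_char_0 ct)"
proof (induct i arbitrary: n)
  case 0
  show ?case
  proof (induct l arbitrary: n)
    case 0 then show ?case using spn_K by simp
  next
    case (Suc l)
    show ?case unfolding ders_Suc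
      by (rule spn_cong[OF ceq.prd_derr spn_Add[OF spn_Der[OF Suc] spn_Sml[OF Suc]]])
  qed
next
  case (Suc i)
  show ?case unfolding ders_Suc by (rule spn_cong[OF ceq.prd_derl spn_Sml[OF Suc]])
qed

lemma spn_Prd: assumes s: "spn s" and t: "spn t" shows "spn (Prd n s t :: 'k::field_char_0 ct)"
proof -
  obtain L1 where 1: "ceq 2 s (LC L1)" using s spn_def by blast
  obtain L2 where 2: "ceq 2 t (LC L2)" using t spn_def by blast
  let ?f = "\<lambda>(c, i, a). Sml c (ders i (L0v a)) :: 'k ct"
  have "ceq 2 (Prd n s t) (Prd n (LC L1) (LC L2))" using 1 2 by (rule ceq.cPrd)
  also have "ceq 2 ... (tsum (map (\<lambda>x. Prd n x (LC L2)) (map ?f L1)))" unfolding LC_def[of L1] by (rule tsum_prdl)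
  finally have e: "ceq 2 (Prd n s t) (tsum (map (\<lambda>x. Prd n x (LC L2)) (map ?f L1)))" .
  have "spn (Prd n (?f x) (LC L2))" for x
  proof -
    obtain c i a where x: "x = (c, i, a)" by (cases x) auto
    have "ceq 2 (Prd n (?f x) (LC L2)) (tsum (map (\<lambda>y. Prd n (?f x) y) (map ?f L2)))" unfolding LC_def by (rule tsum_prdr)
    moreover have "spn (tsum (map (\<lambda>y. Prd n (?f x) y) (map ?f L2)))"
    proof (rule spn_tsum)
      fix z assume "z \<in> set (map (\<lambda>y. Prd n (?f x) y) (map ?f L2))"
      then obtain c' i' b where z: "z = Prd n (?f x) (Sml c' (ders i' (L0v b)))" by auto
      have "ceq 2 z (Sml c (Prd n (ders i (L0v a)) (Sml c' (ders i' (L0v b)))))"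
        unfolding z x by (simp add: ceq.prd_smll)
      also have "ceq 2 ... (Sml c (Sml c' (Prd n (ders i (L0v a)) (ders i' (L0v b)))))"
        by (rule ceq.cSml, rule ceq.prd_smlr)
      finally show "spn z" by (rule spn_cong[OF _ spn_Sml[OF spn_Sml[OF spn_D]]])
    qed
    ultimately show ?thesis by (rule spn_cong)
  qed
  then have "spn (tsum (map (\<lambda>x. Prd n x (LC L2)) (map ?f L1)))" by (intro spn_tsum) auto
  with e show ?thesis by (rule spn_cong)
qed

lemma spn_all: "spn (t :: 'k::field_char_0 ct)"
  by (induct t) (simp_all add: spn_Gen spn_Zer spn_Add spn_Sml spn_Der spn_Prd)


lemma add_swap: "ceq N (Add (Add a b) (Add c d)) (Add (Add a c) (Add b d))"
proof -
  have "ceq N (Add (Add a b) (Add c d)) (Add a (Add b (Add c d)))" by (rule ceq.add_assoc)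
  also have "ceq N ... (Add a (Add (Add b c) d))" by (rule ceq.cAdd, rule ceq.refl, rule ceq.sym, rule ceq.add_assoc)
  also have "ceq N ... (Add a (Add (Add c b) d))" by (rule ceq.cAdd, rule ceq.refl, rule ceq.cAdd, rule ceq.add_comm, rule ceq.refl)
  also have "ceq N ... (Add a (Add c (Add b d)))" by (rule ceq.cAdd, rule ceq.refl, rule ceq.add_assoc)
  also have "ceq N ... (Add (Add a c) (Add b d))" by (rule ceq.sym, rule ceq.add_assoc)
  finally show ?thesis .
qed

lemma tsum_add_map: "ceq N (tsum (map (\<lambda>x. Add (f x) (g x)) xs)) (Add (tsum (map f xs)) (tsum (map g xs)))"
proof (induct xs)
  case Nil show ?case by simp (rule ceq.sym, rule ceq.add_zero)
next
  case (Cons x xs)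
  have "ceq N (tsum (map (\<lambda>x. Add (f x) (g x)) (x # xs))) (Add (Add (f x) (g x)) (Add (tsum (map f xs)) (tsum (map g xs))))"
    using Cons by (simp add: ceq.cAdd ceq.refl)
  also have "ceq N ... (Add (Add (f x) (tsum (map f xs))) (Add (g x) (tsum (map g xs))))" by (rule add_swap)
  finally show ?case by simp
qed

lemma tsum_single: "distinct xs \<Longrightarrow> x0 \<in> set xs \<Longrightarrow> (\<And>x. x \<in> set xs \<Longrightarrow> x \<noteq> x0 \<Longrightarrow> ceq N (f x) Zer)
   \<Longrightarrow> ceq N (tsum (map f xs)) (f x0)"
proof (induct xs)
  case Nil then show ?case by simp
next
  case (Cons x xs)
  show ?case
  proof (cases "x = x0")
    case True
    then have "x0 \<notin> set xs" using Cons by simp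
    then have "ceq N (tsum (map f xs)) Zer" using Cons by (intro tsum_zero) auto
    then have "ceq N (tsum (map f (x # xs))) (Add (f x0) Zer)" using True by (simp add: ceq.cAdd ceq.refl)
    also have "ceq N ... (f x0)" by (rule add_zero_r)
    finally show ?thesis .
  next
    case False
    then have "ceq N (tsum (map f (x # xs))) (Add Zer (f x0))" using Cons by (simp add: ceq.cAdd)
    also have "ceq N ... (f x0)" by (rule ceq.add_zero)
    finally show ?thesis .
  qed
qed

definition pactE :: "nat \<Rightarrow> 'k::field_char_0 poly \<Rightarrow> 'k ct \<Rightarrow> 'k ct" where
  "pactE E p Y = tsum (map (\<lambda>i. Sml (coeff p i) (ders i Y)) [0..<E])"
definition NF :: "nat \<Rightarrow> nat \<Rightarrow> 'k::field_char_0 M \<Rightarrow> 'k ct" where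
  "NF A E U = tsum (map (\<lambda>a. pactE E (coeff U (Suc a)) (L0v a)) [0..<A])"

lemma pactE_add: "ceq N (pactE E (p + q) Y) (Add (pactE E p Y) (pactE E q Y))"
proof -
  have "ceq N (pactE E (p + q) Y) (tsum (map (\<lambda>i. Add (Sml (coeff p i) (ders i Y)) (Sml (coeff q i) (ders i Y))) [0..<E]))"
    unfolding pactE_def by (rule tsum_cong) (simp add: ceq.sml_distl)
  also have "ceq N ... (Add (pactE E p Y) (pactE E q Y))" unfolding pactE_def by (rule tsum_add_map)
  finally show ?thesis .
qed

lemma pactE_0: "ceq N (pactE E 0 Y) Zer"
  unfolding pactE_def by (rule tsum_zero) (auto simp: ceq.sml_zero)

lemma pactE_monom: "i < E \<Longrightarrow> ceq N (pactE E (monom c i) Y) (Sml c (ders i Y))"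
proof -
  assume i: "i < E"
  have "ceq N (pactE E (monom c i) Y) ((\<lambda>j. Sml (coeff (monom c i) j) (ders j Y)) i)"
    unfolding pactE_def by (rule tsum_single) (use i in \<open>auto simp: ceq.sml_zero\<close>)
  then show ?thesis by simp
qed

lemma NF_add: "ceq N (NF A E (U + V)) (Add (NF A E U) (NF A E V))"
proof -
  have "ceq N (NF A E (U + V)) (tsum (map (\<lambda>a. Add (pactE E (coeff U (Suc a)) (L0v a)) (pactE E (coeff V (Suc a)) (L0v a))) [0..<A]))"
    unfolding NF_def by (rule tsum_cong) (simp add: pactE_add)
  also have "ceq N ... (Add (NF A E U) (NF A E V))" unfolding NF_def by (rule tsum_add_map)
  finally show ?thesis .
qed

lemma NF_0: "ceq N (NF A E 0) Zer"
  unfolding NF_def by (rule tsum_zero) (auto simp: pactE_0)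

lemma NF_monom: "a < A \<Longrightarrow> i < E \<Longrightarrow> ceq N (NF A E (monom (monom c i) (Suc a))) (Sml c (ders i (L0v a)))"
proof -
  assume a: "a < A" and i: "i < E"
  have "ceq N (NF A E (monom (monom c i) (Suc a))) ((\<lambda>b. pactE E (coeff (monom (monom c i) (Suc a)) (Suc b)) (L0v b)) a)"
    unfolding NF_def by (rule tsum_single) (use a in \<open>auto simp: pactE_0\<close>)
  also have "ceq N ... (Sml c (ders i (L0v a)))" using i by (simp add: pactE_monom)
  finally show ?thesis .
qed

lemma mP_01: "mPrd 0 1 V = (V :: 'k::field_char_0 M)"
proof (induct V rule: M_induct)
  case 1 show ?case by (simp add: mP_11)
next
  case (2 c U) then show ?case by (simp add: mP_kr)
next
  case (3 U V) then show ?case by (simp add: mP_addr)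
next
  case (4 U) then show ?case by (simp add: mP_Xr)
next
  case (5 U) then show ?case by (simp add: mP_Dr)
qed

lemma ev_L0v: "ev (L0v a) = (monom 1 (Suc a) :: 'k::field_char_0 M)"
proof (induct a)
  case 0 show ?case by (simp add: L0v_def monom_Suc monom_0)
next
  case (Suc a) then show ?case by (simp add: L0v_Suc mP_Xl mP_01 monom_Suc)
qed

lemma ev_item: "ev (Sml c (ders i (L0v a))) = (monom (monom c i) (Suc a) :: 'k::field_char_0 M)"
  by (simp add: ev_ders ev_L0v smult_monom monom_altdef)

lemma LC_NF: "(\<And>c i a. (c, i, a) \<in> set L \<Longrightarrow> a < A \<and> i < E) \<Longrightarrow> ceq 2 (LC L) (NF A E (ev (LC L)))"
proof (induct L)
  case Nil show ?case by (simp add: LC_def) (rule ceq.sym, rule NF_0)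
next
  case (Cons x L)
  obtain c i a where x: "x = (c, i, a)" by (cases x) auto
  have ai: "a < A" "i < E" using Cons(2)[of c i a] x by auto
  have IH: "ceq 2 (LC L) (NF A E (ev (LC L)))" using Cons by auto
  have e: "LC (x # L) = Add (Sml c (ders i (L0v a))) (LC L)" by (simp add: LC_def x)
  have "ceq 2 (LC (x # L)) (Add (NF A E (monom (monom c i) (Suc a))) (NF A E (ev (LC L))))"
    unfolding e by (rule ceq.cAdd, rule ceq.sym, rule NF_monom[OF ai], rule IH)
  also have "ceq 2 ... (NF A E (ev (LC (x # L))))"
  proof -
    have "ev (LC (x # L)) = monom (monom c i) (Suc a) + ev (LC L)" by (simp only: e ev.simps(3) ev_item)
    then show ?thesis by simp (rule ceq.sym, rule NF_add)
  qed
  finally show ?case .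
qed

lemma mem_le_sl: "x \<in> set xs \<Longrightarrow> x \<le> sum_list (xs :: nat list)"
  by (induct xs) auto

lemma norm_ex: "\<exists>A0 E0. \<forall>A E. A0 \<le> A \<longrightarrow> E0 \<le> E \<longrightarrow> ceq 2 t (NF A E (ev (t :: 'k::field_char_0 ct)))"
proof -
  obtain L where L: "ceq 2 t (LC L)" using spn_all[of t] spn_def by blast
  have evt: "ev t = ev (LC L)" using sound[OF L] .
  define A0 where "A0 = Suc (sum_list (map (\<lambda>(c, i, a). a) L))"
  define E0 where "E0 = Suc (sum_list (map (\<lambda>(c, i, a). i) L))"
  show ?thesis
  proof (intro exI allI impI)
    fix A E assume A: "A0 \<le> A" and E: "E0 \<le> E"
    have "(c, i, a) \<in> set L \<Longrightarrow> a < A \<and> i < E" for c i a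
    proof -
      assume m: "(c, i, a) \<in> set L"
      have "a \<le> sum_list (map (\<lambda>(c, i, a). a) L)" by (rule mem_le_sl) (use m in force)
      moreover have "i \<le> sum_list (map (\<lambda>(c, i, a). i) L)" by (rule mem_le_sl) (use m in force)
      ultimately show ?thesis using A E A0_def E0_def by simp
    qed
    then have "ceq 2 (LC L) (NF A E (ev (LC L)))" by (rule LC_NF)
    then show "ceq 2 t (NF A E (ev t))" using L evt by (metis ceq.trans)
  qed
qed

lemma complete: "ev s = ev t \<Longrightarrow> ceq 2 s (t :: 'k::field_char_0 ct)"
proof -
  assume e: "ev s = ev t"
  obtain A1 E1 where 1: "\<forall>A E. A1 \<le> A \<longrightarrow> E1 \<le> E \<longrightarrow> ceq 2 s (NF A E (ev s))" using norm_ex by blast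
  obtain A2 E2 where 2: "\<forall>A E. A2 \<le> A \<longrightarrow> E2 \<le> E \<longrightarrow> ceq 2 t (NF A E (ev t))" using norm_ex by blast
  have "ceq 2 s (NF (max A1 A2) (max E1 E2) (ev s))" using 1 by simp
  moreover have "ceq 2 t (NF (max A1 A2) (max E1 E2) (ev s))" using 2 e by simp
  ultimately show ?thesis by (meson ceq.sym ceq.trans)
qed


lemma degree_br: "degree (br U W) \<le> degree U + degree W"
proof -
  have "degree (br U W) \<le> degree (map_poly s1 U) + degree (pcompose (map_poly s2 W) [:[:0, 1:], 1:])"
    unfolding br_def by (rule degree_mult_le)
  also have "... \<le> degree U + degree W"
  proof (rule add_mono)
    show "degree (map_poly s1 U) \<le> degree U" by (rule map_poly_degree_leq)
    show "degree (pcompose (map_poly s2 W) [:[:0, 1:], 1:]) \<le> degree W"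
      using degree_pcompose_le[of "map_poly s2 W" "[:[:0, 1:], 1:]"] map_poly_degree_leq[of s2 W] by simp
  qed
  finally show ?thesis .
qed

lemma degree_mPrd: "degree (mPrd k U W) \<le> degree U + degree W"
proof -
  have "degree (mPrd k U W) \<le> degree (cl k (br U W))" unfolding mPrd_def by (rule degree_smult_le)
  also have "... \<le> degree (br U W)" unfolding cl_def by (rule map_poly_degree_leq)
  also have "... \<le> degree U + degree W" by (rule degree_br)
  finally show ?thesis .
qed

lemma degree_mono: "degree (ev (mono ns) :: 'k::field_char_0 M) \<le> Suc (length ns)"
proof (induct ns)
  case Nil show ?case by simp
next
  case (Cons n ns)
  have "degree (ev (mono (n # ns)) :: 'k M) \<le> degree (pCons 0 (1::'k M)) + degree (ev (mono ns) :: 'k M)"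
    by (simp only: mono.simps ev.simps, rule degree_mPrd)
  also have "... \<le> Suc (length (n # ns))" using Cons by simp
  finally show ?case .
qed

lemma degree_sum_list_le: "(\<And>x. x \<in> set xs \<Longrightarrow> degree x \<le> n) \<Longrightarrow> degree (sum_list xs) \<le> n"
  by (induct xs) (simp_all add: degree_add_le)

lemma inF_char: "inF 2 n t \<longleftrightarrow> degree (ev (t :: 'k::field_char_0 ct)) \<le> n"
proof
  assume "inF 2 n t"
  then obtain L :: "('k \<times> nat \<times> nat list) list" where L: "\<forall>(c, i, ns) \<in> set L. length ns < n"
    and e: "ceq 2 t (tsum (map (\<lambda>(c, i, ns). Sml c (ders i (mono ns))) L))" unfolding inF_def by blast
  have "ev t = sum_list (map (ev \<circ> (\<lambda>(c, i, ns). Sml c (ders i (mono ns)))) L)"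
    using sound[OF e] by (simp add: ev_tsum)
  also have "degree ... \<le> n"
  proof (rule degree_sum_list_le)
    fix x assume "x \<in> set (map (ev \<circ> (\<lambda>(c, i, ns). Sml c (ders i (mono ns)))) L)"
    then obtain c i ns where m: "(c, i, ns) \<in> set L" and x: "x = ev (Sml c (ders i (mono ns)))" by auto
    have "degree x \<le> degree (ev (mono ns) :: 'k M)"
      unfolding x by (simp add: ev_ders)
    also have "... \<le> Suc (length ns)" by (rule degree_mono)
    also have "... \<le> n" using L m by auto
    finally show "degree x \<le> n" .
  qed
  finally show "degree (ev t) \<le> n" .
next
  assume d: "degree (ev t) \<le> n"
  obtain A0 E0 where ne: "\<forall>A E. A0 \<le> A \<longrightarrow> E0 \<le> E \<longrightarrow> ceq 2 t (NF A E (ev t))" using norm_ex by blast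
  define A where "A = max A0 n"
  define U where "U = ev t"
  have "ceq 2 t (NF A E0 U)" using ne A_def U_def by simp
  moreover have "[0..<A] = [0..<n] @ [n..<A]" unfolding A_def by (simp add: upt_add_eq_append[of 0 n "max A0 n - n", simplified])
  ultimately have "ceq 2 t (tsum (map (\<lambda>a. pactE E0 (coeff U (Suc a)) (L0v a)) [0..<n] @ map (\<lambda>a. pactE E0 (coeff U (Suc a)) (L0v a)) [n..<A]))"
    by (simp add: NF_def)
  also have "ceq 2 ... (Add (tsum (map (\<lambda>a. pactE E0 (coeff U (Suc a)) (L0v a)) [0..<n])) (tsum (map (\<lambda>a. pactE E0 (coeff U (Suc a)) (L0v a)) [n..<A])))"
    by (rule tsum_append)
  also have "ceq 2 ... (Add (tsum (map (\<lambda>a. pactE E0 (coeff U (Suc a)) (L0v a)) [0..<n])) Zer)"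
  proof (rule ceq.cAdd[OF ceq.refl], rule tsum_zero)
    fix x assume "x \<in> set (map (\<lambda>a. pactE E0 (coeff U (Suc a)) (L0v a)) [n..<A])"
    then obtain a where a: "n \<le> a" and x: "x = pactE E0 (coeff U (Suc a)) (L0v a)" by auto
    have "coeff U (Suc a) = 0" using d a U_def by (simp add: coeff_eq_0)
    then show "ceq 2 x Zer" unfolding x by (simp add: pactE_0)
  qed
  also have "ceq 2 ... (tsum (map (\<lambda>a. pactE E0 (coeff U (Suc a)) (L0v a)) [0..<n]))" by (rule add_zero_r)
  finally have t1: "ceq 2 t (tsum (map (\<lambda>a. pactE E0 (coeff U (Suc a)) (L0v a)) [0..<n]))" .
  define g where "g = (\<lambda>(c, i, ns). Sml c (ders i (mono ns)) :: 'k ct)"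
  define xss where "xss = map (\<lambda>a. map (\<lambda>i. (coeff (coeff U (Suc a)) i, i, replicate a (0::nat))) [0..<E0]) [0..<n]"
  have "tsum (map (\<lambda>a. pactE E0 (coeff U (Suc a)) (L0v a)) [0..<n]) = tsum (map tsum (map (map g) xss))"
    by (simp add: xss_def g_def pactE_def L0v_def o_def)
  also have "ceq 2 ... (tsum (concat (map (map g) xss)))" by (rule ceq.sym, rule tsum_concat)
  finally have t2: "ceq 2 t (tsum (map g (concat xss)))" using t1 by (simp add: map_concat ceq.trans)
  show "inF 2 n t" unfolding inF_def
  proof (intro exI conjI)
    show "\<forall>(c, i, ns) \<in> set (concat xss). length ns < n" by (auto simp: xss_def)
    show "ceq 2 t (tsum (map (\<lambda>(c, i, ns). Sml c (ders i (mono ns))) (concat xss)))" using t2 by (simp add: g_def)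
  qed
qed

lemma ev_pact: "ev (pact p Y) = smult p (ev (Y :: 'k::field_char_0 ct))"
proof -
  have "ev (pact p Y) = (\<Sum>i\<in>{0..<Suc (degree p)}. smult [:coeff p i:] (smult ([:0, 1:] ^ i) (ev Y)))"
    by (simp add: pact_def ev_tsum ev_ders sum_list_upt o_def del: upt_Suc)
  also have "... = (\<Sum>i\<le>degree p. smult (monom (coeff p i) i) (ev Y))"
    by (simp add: atLeast0LessThan lessThan_Suc_atMost monom_altdef)
  also have "... = smult p (ev Y)" by (simp add: poly_as_sum_of_monoms flip: smult_sum)
  finally show ?thesis .
qed

lemma ceq_Zer_iff: "ceq 2 t Zer \<longleftrightarrow> ev (t :: 'k::field_char_0 ct) = 0"
  using sound complete by fastforce


lemma coeff_mult_top:
  fixes A B :: "'a::comm_ring_1 poly"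
  assumes "degree A \<le> n" "degree B \<le> m"
  shows "coeff (A * B) (n + m) = coeff A n * coeff B m"
proof -
  have "coeff (A * B) (n + m) = (\<Sum>i\<le>n + m. coeff A i * coeff B (n + m - i))" by (rule coeff_mult)
  also have "... = (\<Sum>i\<in>{n}. coeff A i * coeff B (n + m - i))"
  proof (rule sum.mono_neutral_right)
    show "\<forall>i\<in>{..n + m} - {n}. coeff A i * coeff B (n + m - i) = 0"
    proof
      fix i assume "i \<in> {..n + m} - {n}"
      then have "i < n \<or> i > n" by auto
      then show "coeff A i * coeff B (n + m - i) = 0"
        using assms by (auto simp: coeff_eq_0)
    qed
  qed auto
  finally show ?thesis by simp
qed

lemma coeff_mult_sub:
  fixes A B :: "'a::comm_ring_1 poly"
  assumes "degree A \<le> n" "degree B \<le> m" "1 \<le> n" "1 \<le> m"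
  shows "coeff (A * B) (n + m - 1) = coeff A n * coeff B (m - 1) + coeff A (n - 1) * coeff B m"
proof -
  have "coeff (A * B) (n + m - 1) = (\<Sum>i\<le>n + m - 1. coeff A i * coeff B (n + m - 1 - i))" by (rule coeff_mult)
  also have "... = (\<Sum>i\<in>{n - 1, n}. coeff A i * coeff B (n + m - 1 - i))"
  proof (rule sum.mono_neutral_right)
    show "\<forall>i\<in>{..n + m - 1} - {n - 1, n}. coeff A i * coeff B (n + m - 1 - i) = 0"
    proof
      fix i assume "i \<in> {..n + m - 1} - {n - 1, n}"
      then have "i < n - 1 \<or> i > n" by auto
      then show "coeff A i * coeff B (n + m - 1 - i) = 0"
        using assms by (auto simp: coeff_eq_0)
    qed
  qed (use assms in auto)
  also have "... = coeff A n * coeff B (m - 1) + coeff A (n - 1) * coeff B m"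
    using assms by (simp add: algebra_simps)
  finally show ?thesis .
qed

lemma pcompose_monom: "pcompose (monom a j) q = smult a (q ^ j)"
  by (induct j) (simp_all add: monom_0 monom_Suc pcompose_pCons)

lemma coeff_pcompose_sum:
  assumes "degree V \<le> D"
  shows "coeff (pcompose V q) i = (\<Sum>j\<le>D. coeff V j * coeff (q ^ j) i)"
proof -
  have "pcompose V q = pcompose (\<Sum>j\<le>D. monom (coeff V j) j) q" using poly_as_sum_of_monoms'[OF assms] by simp
  also have "... = (\<Sum>j\<le>D. smult (coeff V j) (q ^ j))" by (simp add: pcompose_sum pcompose_monom)
  finally show ?thesis by (simp add: coeff_sum)
qed

lemma coeff_lin_pow: "coeff ([:c, 1:] ^ j) i = (if i \<le> j then of_nat (j choose i) * c ^ (j - i) else (0::'a::comm_ring_1))"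
proof (cases "i \<le> j")
  case True then show ?thesis by (simp add: coeff_linear_poly_power)
next
  case False
  have "degree ([:c, 1:] ^ j) \<le> j" using degree_power_le[of "[:c,1::'a:]" j] by simp
  then show ?thesis using False by (simp add: coeff_eq_0)
qed

lemma pc_top:
  fixes c :: "'a::comm_ring_1"
  assumes "degree V \<le> m"
  shows "coeff (pcompose V [:c, 1:]) m = coeff V m"
proof -
  have "coeff (pcompose V [:c, 1:]) m = (\<Sum>j\<le>m. coeff V j * coeff ([:c, 1:] ^ j) m)" by (rule coeff_pcompose_sum[OF assms])
  also have "... = (\<Sum>j\<in>{m}. coeff V j * coeff ([:c, 1:] ^ j) m)"
    by (rule sum.mono_neutral_right) (auto simp: coeff_lin_pow)
  finally show ?thesis by (simp add: coeff_lin_pow)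
qed

lemma pc_sub:
  fixes c :: "'a::comm_ring_1"
  assumes "degree V \<le> m" "1 \<le> m"
  shows "coeff (pcompose V [:c, 1:]) (m - 1) = coeff V (m - 1) + of_nat m * c * coeff V m"
proof -
  have "coeff (pcompose V [:c, 1:]) (m - 1) = (\<Sum>j\<le>m. coeff V j * coeff ([:c, 1:] ^ j) (m - 1))" by (rule coeff_pcompose_sum[OF assms(1)])
  also have "... = (\<Sum>j\<in>{m - 1, m}. coeff V j * coeff ([:c, 1:] ^ j) (m - 1))"
    by (rule sum.mono_neutral_right) (use assms in \<open>auto simp: coeff_lin_pow\<close>)
  also have "... = coeff V (m - 1) + of_nat m * c * coeff V m"
  proof -
    have mc: "m choose (m - Suc 0) = m" using binomial_symmetric[of "m - 1" m] assms(2) by simp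
    show ?thesis using assms by (simp add: coeff_lin_pow mc algebra_simps)
  qed
  finally show ?thesis .
qed

lemma degree_drop: assumes "degree P \<le> n" "coeff P n = 0" shows "degree P \<le> n - 1"
proof (cases "degree P = n")
  case True
  then have "lead_coeff P = 0" using assms(2) by simp
  then have "P = 0" by simp
  then show ?thesis by simp
next
  case False then show ?thesis using assms(1) by simp
qed


lemma term_eq:
  fixes d :: "'k::field_char_0 poly"
  assumes kj: "k \<le> j"
  shows "[:fact k:] * (d * (of_nat (j choose k) * (-1) ^ k * [:0, -1:] ^ (j - k)))
       = [:(-1) ^ j / fact (j - k):] * ([:0, 1:] ^ (j - k) * ([:fact j:] * d))"
proof -
  have sc: "fact k * (of_nat (j choose k) * ((-1) ^ k * (-1) ^ (j - k))) = ((-1) ^ j / fact (j - k) * fact j :: 'k)"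
  proof -
    have "(-1::'k) ^ k * (-1) ^ (j - k) = (-1) ^ j" using kj by (simp flip: power_add)
    moreover have "fact k * of_nat (j choose k) = (fact j / fact (j - k) :: 'k)"
      using kj by (simp add: binomial_fact field_simps)
    ultimately show ?thesis by (simp add: field_simps)
  qed
  have m1: "[:0, -1::'k:] ^ (j - k) = smult ((-1) ^ (j - k)) ([:0, 1:] ^ (j - k))"
    by (simp flip: smult_power)
  have "[:fact k:] * (d * (of_nat (j choose k) * (-1) ^ k * [:0, -1:] ^ (j - k)))
     = smult (fact k * (of_nat (j choose k) * ((-1) ^ k * (-1) ^ (j - k)))) (d * [:0, 1:] ^ (j - k))"
  proof -
    have n1: "(-1::'k poly) = [:-1:]" by (simp add: one_pCons)
    have mk: "(-1::'k poly) ^ k = [:(-1) ^ k:]" by (simp only: n1 poly_const_pow)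
    show ?thesis by (simp add: m1 mk of_nat_poly mult_ac)
  qed
  also have "... = [:(-1) ^ j / fact (j - k):] * ([:0, 1:] ^ (j - k) * ([:fact j:] * d))"
    by (simp only: sc) (simp add: mult_ac)
  finally show ?thesis .
qed

definition tau :: "'k::field_char_0 poly poly \<Rightarrow> 'k poly poly" where
  "tau c = pcompose c [:[:0, -1:], -1:]"

lemma coeff_lin_pow2: "coeff ([:a, b:] ^ j) i = (if i \<le> j then of_nat (j choose i) * b ^ i * a ^ (j - i) else (0::'a::comm_ring_1))"
proof (cases "i \<le> j")
  case True then show ?thesis by (simp add: coeff_linear_poly_power)
next
  case False
  have "degree ([:a, b:] ^ j) \<le> j"
  proof (induct j)
    case 0 show ?case by simp
  next
    case (Suc j)
    have "degree ([:a, b:] ^ Suc j) \<le> degree [:a, b::'a:] + degree ([:a, b:] ^ j)"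
      by (simp only: power_Suc, rule degree_mult_le)
    also have "... \<le> 1 + j"
    proof -
      have d1: "degree [:a, b::'a:] \<le> 1" using degree_pCons_le[of a "[:b:]"] by simp
      show ?thesis using Suc d1 by linarith
    qed
    finally show ?case by simp
  qed
  then show ?thesis using False by (simp add: coeff_eq_0)
qed

lemma deg_from_zero: "\<forall>j\<ge>B. coeff c j = 0 \<Longrightarrow> degree c \<le> B"
  by (metis leading_coeff_0_iff degree_0 le_zero_eq nat_le_linear)

lemma brk_c:
  fixes c :: "'k::field_char_0 poly poly"
  assumes z: "\<forall>j\<ge>B. coeff c j = 0"
  shows "(\<Sum>j\<in>{k..<B}. [:(-1) ^ j / fact (j - k):] * ([:0, 1:] ^ (j - k) * ([:fact j:] * coeff c j)))
     = [:fact k:] * coeff (tau c) k"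
proof -
  have dc: "degree c \<le> B + k" using deg_from_zero[OF z] by simp
  have "[:fact k:] * coeff (tau c) k = [:fact k:] * (\<Sum>j\<le>B + k. coeff c j * coeff ([:[:0, -1:], -1:] ^ j) k)"
    unfolding tau_def by (simp only: coeff_pcompose_sum[OF dc])
  also have "... = (\<Sum>j\<le>B + k. [:fact k:] * (coeff c j * coeff ([:[:0, -1:], -1:] ^ j) k))"
    by (simp add: sum_distrib_left)
  also have "... = (\<Sum>j\<in>{k..<B}. [:(-1) ^ j / fact (j - k):] * ([:0, 1:] ^ (j - k) * ([:fact j:] * coeff c j)))"
  proof (rule sum.mono_neutral_cong_right)
    show "{k..<B} \<subseteq> {..B + k}" by auto
    show "\<forall>j\<in>{..B + k} - {k..<B}. [:fact k:] * (coeff c j * coeff ([:[:0, -1:], -1:] ^ j) k) = 0"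
    proof
      fix j assume "j \<in> {..B + k} - {k..<B}"
      then have "j < k \<or> j \<ge> B" by auto
      then show "[:fact k:] * (coeff c j * coeff ([:[:0, -1:], -1:] ^ j) k) = 0"
        using z by (auto simp: coeff_lin_pow2)
    qed
    show "[:fact k:] * (coeff c j * coeff ([:[:0, -1:], -1:] ^ j) k) =
         [:(-1) ^ j / fact (j - k):] * ([:0, 1:] ^ (j - k) * ([:fact j:] * coeff c j))" if "j \<in> {k..<B}" for j
    proof -
      have kj: "k \<le> j" using that by simp
      show ?thesis using term_eq[OF kj, of "coeff c j"] kj by (simp add: coeff_lin_pow2)
    qed
  qed simp
  finally show ?thesis by simp
qed

lemma tau_0[simp]: "tau 0 = 0" by (simp add: tau_def)

lemma brk_sum:
  fixes P :: "'k::field_char_0 poly poly poly"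
  assumes z: "\<forall>j\<ge>B. cl j P = 0"
  shows "(\<Sum>j\<in>{k..<B}. smult [:(-1) ^ j / fact (j - k):] (smult ([:0, 1:] ^ (j - k)) (smult [:fact j:] (cl j P))))
     = smult [:fact k:] (cl k (map_poly tau P))"
proof (rule poly_eqI)
  fix a
  have z': "\<forall>j\<ge>B. coeff (coeff P a) j = 0" using z by (metis cl_coeff coeff_0)
  have "coeff (\<Sum>j\<in>{k..<B}. smult [:(-1) ^ j / fact (j - k):] (smult ([:0, 1:] ^ (j - k)) (smult [:fact j:] (cl j P)))) a
     = (\<Sum>j\<in>{k..<B}. [:(-1) ^ j / fact (j - k):] * ([:0, 1:] ^ (j - k) * ([:fact j:] * coeff (coeff P a) j)))"
    by (simp add: coeff_sum cl_coeff)
  also have "... = [:fact k:] * coeff (tau (coeff P a)) k" by (rule brk_c[OF z'])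
  also have "... = coeff (smult [:fact k:] (cl k (map_poly tau P))) a"
    by (simp add: cl_coeff coeff_map_poly)
  finally show "coeff (\<Sum>j\<in>{k..<B}. smult [:(-1) ^ j / fact (j - k):] (smult ([:0, 1:] ^ (j - k)) (smult [:fact j:] (cl j P)))) a
     = coeff (smult [:fact k:] (cl k (map_poly tau P))) a" .
qed


lemma tau_add: "tau (a + b) = tau a + tau b" by (simp add: tau_def pcompose_add)
lemma tau_mult: "tau (a * b) = tau a * tau b" by (simp add: tau_def pcompose_mult)

lemma psub_pcomp: "pcompose (psub a s) Q = psub a (pcompose s Q)"
  by (induct a) (simp_all add: psub_pCons pcompose_add pcompose_mult)

lemma tau_s1: "tau (s1 a) = s2 a"
proof -
  have "pcompose [:0, -1:] [:[:0, -1:], -1::'a poly:] = [:[:0, 1:], 1:]"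
    by (simp add: pcompose_pCons)
  then show ?thesis by (simp add: tau_def s1_def s2_def psub_pcomp)
qed

lemma tau_s2: "tau (s2 a) = s1 a"
proof -
  have "pcompose [:[:0, 1:], 1:] [:[:0, -1:], -1::'a poly:] = [:0, -1:]"
    by (simp add: pcompose_pCons)
  then show ?thesis by (simp add: tau_def s1_def s2_def psub_pcomp)
qed

lemma tau_L: "tau [:0, 1:] = - [:[:0, 1:]:] - [:0, 1::'k::field_char_0 poly:]"
  by (simp add: tau_def pcompose_pCons)

lemma tau_of_nat: "tau (of_nat n) = of_nat n"
  by (simp add: tau_def of_nat_poly)

lemma deg_comp: "degree (pcompose (map_poly s2 W) [:[:0, 1:], 1:]) \<le> degree W"
  using degree_pcompose_le[of "map_poly s2 W" "[:[:0, 1:], 1:]"] map_poly_degree_leq[of s2 W] by simp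

lemma br_top:
  assumes "degree U \<le> n" "degree W \<le> m"
  shows "coeff (br U W) (n + m) = s1 (coeff U n) * s2 (coeff W m)"
proof -
  have dA: "degree (map_poly s1 U) \<le> n" using map_poly_degree_leq[of s1 U] assms by linarith
  have dB: "degree (pcompose (map_poly s2 W) [:[:0, 1:], 1:]) \<le> m" using deg_comp[of W] assms by linarith
  have dW: "degree (map_poly s2 W) \<le> m" using map_poly_degree_leq[of s2 W] assms by linarith
  show ?thesis unfolding br_def coeff_mult_top[OF dA dB] pc_top[OF dW] by (simp add: coeff_map_poly)
qed

lemma br_sub:
  assumes "degree U \<le> n" "degree W \<le> m" "1 \<le> n" "1 \<le> m"
  shows "coeff (br U W) (n + m - 1) = s1 (coeff U n) * (s2 (coeff W (m - 1)) + of_nat m * [:0, 1:] * s2 (coeff W m))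
     + s1 (coeff U (n - 1)) * s2 (coeff W m)"
proof -
  have dA: "degree (map_poly s1 U) \<le> n" using map_poly_degree_leq[of s1 U] assms by linarith
  have dB: "degree (pcompose (map_poly s2 W) [:[:0, 1:], 1:]) \<le> m" using deg_comp[of W] assms by linarith
  have dW: "degree (map_poly s2 W) \<le> m" using map_poly_degree_leq[of s2 W] assms by linarith
  show ?thesis unfolding br_def coeff_mult_sub[OF dA dB assms(3,4)] pc_top[OF dW] pc_sub[OF dW assms(4)]
    by (simp add: coeff_map_poly)
qed

definition Qb :: "'k::field_char_0 M \<Rightarrow> 'k M \<Rightarrow> 'k poly poly poly" where
  "Qb U W = br U W - map_poly tau (br W U)"

lemma coeff_Qb: "coeff (Qb U W) a = coeff (br U W) a - tau (coeff (br W U) a)"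
  by (simp add: Qb_def coeff_map_poly)

lemma degree_Qb: "degree (Qb U W) \<le> degree U + degree W"
proof -
  have "degree (Qb U W) \<le> max (degree (br U W)) (degree (map_poly tau (br W U)))"
    unfolding Qb_def by (rule degree_diff_le_max)
  moreover have "degree (map_poly tau (br W U)) \<le> degree U + degree W"
    using map_poly_degree_leq[of tau "br W U"] degree_br[of W U] by linarith
  ultimately show ?thesis using degree_br[of U W] by linarith
qed

lemma Qb_top:
  assumes "degree U \<le> n" "degree W \<le> m"
  shows "coeff (Qb U W) (n + m) = 0"
  using br_top[OF assms] br_top[OF assms(2,1)]
  by (simp add: coeff_Qb add.commute tau_mult tau_s1 tau_s2 mult.commute)

lemma Qb_sub:
  assumes "degree U \<le> n" "degree W \<le> m" "1 \<le> n" "1 \<le> m"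
  shows "coeff (Qb U W) (n + m - 1) = (of_nat n * [:[:0, 1:]:] + of_nat (n + m) * [:0, 1:]) * (s1 (coeff U n) * s2 (coeff W m))"
proof -
  have e: "m + n - 1 = n + m - 1" by simp
  have h1: "coeff (br U W) (n + m - 1) = s1 (coeff U n) * (s2 (coeff W (m - 1)) + of_nat m * [:0, 1:] * s2 (coeff W m))
     + s1 (coeff U (n - 1)) * s2 (coeff W m)" by (rule br_sub[OF assms])
  have h2: "coeff (br W U) (n + m - 1) = s1 (coeff W m) * (s2 (coeff U (n - 1)) + of_nat n * [:0, 1:] * s2 (coeff U n))
     + s1 (coeff W (m - 1)) * s2 (coeff U n)" using br_sub[OF assms(2,1,4,3)] by (simp only: e)
  have h3: "tau (coeff (br W U) (n + m - 1)) = s2 (coeff W m) * (s1 (coeff U (n - 1)) + of_nat n * (- [:[:0, 1:]:] - [:0, 1:]) * s1 (coeff U n))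
     + s2 (coeff W (m - 1)) * s1 (coeff U n)"
    by (simp only: h2 tau_add tau_mult tau_s1 tau_s2 tau_of_nat tau_L)
  show ?thesis unfolding coeff_Qb h1 h3 of_nat_add by algebra
qed


lemma coeff_mPrd: "coeff (mPrd j U W) a = smult (fact j) (coeff (coeff (br U W) a) j)"
  by (simp add: mPrd_def cl_coeff)

lemma cl_diff: "cl n (P - Q) = cl n P - cl n Q"
  by (rule poly_eqI) (simp add: cl_coeff)

lemma cl_vanish: "\<exists>B. \<forall>j\<ge>B. cl j P = 0"
proof (intro exI allI impI)
  fix j assume j: "Suc (\<Sum>a\<le>degree P. degree (coeff P a)) \<le> j"
  show "cl j P = 0"
  proof (rule poly_eqI)
    fix a
    show "coeff (cl j P) a = coeff 0 a"
    proof (cases "a \<le> degree P")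
      case True
      have "degree (coeff P a) \<le> (\<Sum>a\<le>degree P. degree (coeff P a))"
        by (rule member_le_sum) (use True in auto)
      then show ?thesis using j by (simp add: cl_coeff coeff_eq_0)
    next
      case False then show ?thesis by (simp add: cl_coeff coeff_eq_0)
    qed
  qed
qed

lemma ev_Sub_pact: "1 \<le> n \<Longrightarrow> ev (Sub x (pact p (L0v (n - 1)))) = ev x - monom p n"
  by (simp add: ev_Sub ev_pact ev_L0v smult_monom)

lemma lead_from: fixes U :: "'a::comm_ring_1 poly" assumes "1 \<le> n" "degree (U - monom p n) \<le> n - 1" shows "coeff U n = p"
proof -
  have lt: "degree (U - monom p n) < n" using assms by linarith
  have "coeff (U - monom p n) n = 0" by (rule coeff_eq_0[OF lt])
  then show ?thesis by simp
qed

lemma top_drop: fixes U :: "'a::comm_ring_1 poly" assumes "degree U \<le> n" "coeff U n = p" shows "degree (U - monom p n) \<le> n - 1"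
proof (rule degree_drop)
  show "degree (U - monom p n) \<le> n"
    using degree_diff_le[OF assms(1) degree_monom_le[of p n]] .
  show "coeff (U - monom p n) n = 0" using assms by simp
qed

lemma ev_brk:
  assumes hB: "\<forall>j\<ge>B. ceq 2 (Prd j w u) (Zer :: 'k::field_char_0 ct)"
  shows "ev (brk k B u w) = smult [:fact k:] (cl k (Qb (ev u) (ev w)))"
proof -
  have z: "\<forall>j\<ge>B. cl j (br (ev w) (ev u)) = 0"
  proof (intro allI impI)
    fix j assume "B \<le> j"
    then have "ceq 2 (Prd j w u) Zer" using hB by simp
    then have "ev (Prd j w u) = 0" using ceq_Zer_iff by blast
    then have "mPrd j (ev w) (ev u) = 0" by simp
    then show "cl j (br (ev w) (ev u)) = 0" by (simp add: mPrd_def)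
  qed
  have "ev (brk k B u w) = mPrd k (ev u) (ev w) -
     (\<Sum>j\<in>{k..<B}. smult [:(-1) ^ j / fact (j - k):] (smult ([:0, 1:] ^ (j - k)) (smult [:fact j:] (cl j (br (ev w) (ev u))))))"
    by (simp add: brk_def ev_Sub ev_tsum ev_ders sum_list_upt o_def mPrd_def del: upt_Suc)
  also have "... = smult [:fact k:] (cl k (br (ev u) (ev w))) - smult [:fact k:] (cl k (map_poly tau (br (ev w) (ev u))))"
    by (simp only: brk_sum[OF z] mPrd_def)
  also have "... = smult [:fact k:] (cl k (Qb (ev u) (ev w)))"
    by (simp add: Qb_def cl_diff smult_diff_right)
  finally show ?thesis .
qed

lemma pvbr_eq: "pvbr n m p q = (of_nat n * [:[:0, 1:]:] + of_nat (n + m) * [:0, 1:]) * (s1 p * s2 q)"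
proof -
  have "[:[:0, of_nat n:], [:of_nat (n + m):]:] = (of_nat n * [:[:0, 1:]:] + of_nat (n + m) * [:0, 1::'a poly:])"
    by (simp add: of_nat_poly)
  then show ?thesis by (simp add: pvbr_def pvprod_def s1_def s2_def mult.commute)
qed


theorem mainTheorem13:
  shows "(\<forall>n \<ge> 1. inF 2 n (L0v (n - 1) :: 'k::field_char_0 ct) \<and>
           (\<forall>x :: 'k ct. inF 2 n x \<longrightarrow> (\<exists>!p. inF 2 (n - 1) (Sub x (pact p (L0v (n - 1)))))))
   \<and> (\<forall>n m (u :: 'k ct) w p q. 1 \<le> n \<longrightarrow> 1 \<le> m \<longrightarrow> inF 2 n u \<longrightarrow> inF 2 m w \<longrightarrow>
        inF 2 (n - 1) (Sub u (pact p (L0v (n - 1)))) \<longrightarrow>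
        inF 2 (m - 1) (Sub w (pact q (L0v (m - 1)))) \<longrightarrow>
        (\<forall>j. inF 2 (n + m) (Prd j u w) \<and>
             inF 2 (n + m - 1) (Sub (Prd j u w)
                 (pact (smult (fact j) (coeff (pvprod p q) j)) (L0v (n + m - 1)))))
      \<and> (\<exists>B. \<forall>j \<ge> B. ceq 2 (Prd j w u) Zer)
      \<and> (\<forall>B. (\<forall>j \<ge> B. ceq 2 (Prd j w u) Zer) \<longrightarrow>
          (\<forall>k. inF 2 (n + m - 1) (brk k B u w) \<and>
               inF 2 (n + m - 2) (Sub (brk k B u w)
                 (pact (smult (fact k) (coeff (pvbr n m p q) k)) (L0v (n + m - 2)))))))"
proof -
  have partA: "\<forall>n \<ge> 1. inF 2 n (L0v (n - 1) :: 'k::field_char_0 ct) \<and>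
           (\<forall>x :: 'k ct. inF 2 n x \<longrightarrow> (\<exists>!p. inF 2 (n - 1) (Sub x (pact p (L0v (n - 1))))))"
  proof (intro allI impI conjI)
    fix n :: nat assume n: "1 \<le> n"
    have "degree (monom (1::'k poly) (Suc (n - 1))) \<le> n" using n degree_monom_le[of "1::'k poly" "Suc (n - 1)"] by simp
    then show "inF 2 n (L0v (n - 1) :: 'k ct)" unfolding inF_char by (simp only: ev_L0v)
    fix x :: "'k ct" assume x: "inF 2 n x"
    then have dx: "degree (ev x) \<le> n" by (simp add: inF_char)
    show "\<exists>!p. inF 2 (n - 1) (Sub x (pact p (L0v (n - 1))))"
    proof (rule ex1I[of _ "coeff (ev x) n"])
      show "inF 2 (n - 1) (Sub x (pact (coeff (ev x) n) (L0v (n - 1))))"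
        unfolding inF_char ev_Sub_pact[OF n] by (rule top_drop[OF dx HOL.refl])
      fix p assume "inF 2 (n - 1) (Sub x (pact p (L0v (n - 1))))"
      then have "degree (ev x - monom p n) \<le> n - 1" unfolding inF_char ev_Sub_pact[OF n] .
      then show "p = coeff (ev x) n" using lead_from[OF n] by metis
    qed
  qed
  have partB: "\<forall>n m (u :: 'k ct) w p q. 1 \<le> n \<longrightarrow> 1 \<le> m \<longrightarrow> inF 2 n u \<longrightarrow> inF 2 m w \<longrightarrow>
        inF 2 (n - 1) (Sub u (pact p (L0v (n - 1)))) \<longrightarrow>
        inF 2 (m - 1) (Sub w (pact q (L0v (m - 1)))) \<longrightarrow>
        (\<forall>j. inF 2 (n + m) (Prd j u w) \<and>
             inF 2 (n + m - 1) (Sub (Prd j u w)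
                 (pact (smult (fact j) (coeff (pvprod p q) j)) (L0v (n + m - 1)))))
      \<and> (\<exists>B. \<forall>j \<ge> B. ceq 2 (Prd j w u) Zer)
      \<and> (\<forall>B. (\<forall>j \<ge> B. ceq 2 (Prd j w u) Zer) \<longrightarrow>
          (\<forall>k. inF 2 (n + m - 1) (brk k B u w) \<and>
               inF 2 (n + m - 2) (Sub (brk k B u w)
                 (pact (smult (fact k) (coeff (pvbr n m p q) k)) (L0v (n + m - 2))))))"
  proof (intro allI impI)
    fix n m :: nat and u w :: "'k ct" and p q :: "'k poly"
    assume n: "1 \<le> n" and m: "1 \<le> m" and iu: "inF 2 n u" and iw: "inF 2 m w"
      and pu: "inF 2 (n - 1) (Sub u (pact p (L0v (n - 1))))" and qw: "inF 2 (m - 1) (Sub w (pact q (L0v (m - 1))))"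
    define U where "U = ev u"
    define W where "W = ev w"
    have dU: "degree U \<le> n" using iu by (simp add: inF_char U_def)
    have dW: "degree W \<le> m" using iw by (simp add: inF_char W_def)
    have cU: "coeff U n = p" using pu unfolding inF_char ev_Sub_pact[OF n] U_def by (rule lead_from[OF n])
    have cW: "coeff W m = q" using qw unfolding inF_char ev_Sub_pact[OF m] W_def by (rule lead_from[OF m])
    have nm: "1 \<le> n + m" using n by simp
    show "(\<forall>j. inF 2 (n + m) (Prd j u w) \<and>
             inF 2 (n + m - 1) (Sub (Prd j u w)
                 (pact (smult (fact j) (coeff (pvprod p q) j)) (L0v (n + m - 1)))))
      \<and> (\<exists>B. \<forall>j \<ge> B. ceq 2 (Prd j w u) Zer)
      \<and> (\<forall>B. (\<forall>j \<ge> B. ceq 2 (Prd j w u) Zer) \<longrightarrow>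
          (\<forall>k. inF 2 (n + m - 1) (brk k B u w) \<and>
               inF 2 (n + m - 2) (Sub (brk k B u w)
                 (pact (smult (fact k) (coeff (pvbr n m p q) k)) (L0v (n + m - 2))))))"
    proof (intro conjI allI impI)
      fix j
      have dP: "degree (mPrd j U W) \<le> n + m" using degree_mPrd[of j U W] dU dW by linarith
      then show "inF 2 (n + m) (Prd j u w)" by (simp add: inF_char U_def W_def)
      have cP: "coeff (mPrd j U W) (n + m) = smult (fact j) (coeff (pvprod p q) j)"
        by (simp add: coeff_mPrd br_top[OF dU dW] cU cW pvprod_def s1_def s2_def)
      show "inF 2 (n + m - 1) (Sub (Prd j u w) (pact (smult (fact j) (coeff (pvprod p q) j)) (L0v (n + m - 1))))"
        unfolding inF_char ev_Sub_pact[OF nm] using top_drop[OF dP cP] by (simp add: U_def W_def)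
    next
      obtain B where B: "\<forall>j\<ge>B. cl j (br W U) = 0" using cl_vanish by blast
      show "\<exists>B. \<forall>j\<ge>B. ceq 2 (Prd j w u) Zer"
      proof (intro exI allI impI)
        fix j assume "B \<le> j"
        then have "mPrd j W U = 0" using B by (simp add: mPrd_def)
        then show "ceq 2 (Prd j w u) Zer" by (simp add: ceq_Zer_iff U_def W_def)
      qed
    next
      fix B k assume hB: "\<forall>j\<ge>B. ceq 2 (Prd j w u) Zer"
      have eb: "ev (brk k B u w) = smult [:fact k:] (cl k (Qb U W))" using ev_brk[OF hB] by (simp add: U_def W_def)
      have cb: "coeff (ev (brk k B u w)) a = smult (fact k) (coeff (coeff (Qb U W) a) k)" for a
        by (simp add: eb cl_coeff)
      have db0: "degree (ev (brk k B u w)) \<le> n + m"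
      proof -
        have "degree (ev (brk k B u w)) \<le> degree (cl k (Qb U W))" unfolding eb by (rule degree_smult_le)
        also have "... \<le> degree (Qb U W)" unfolding cl_def by (rule map_poly_degree_leq)
        also have "... \<le> n + m" using degree_Qb[of U W] dU dW by linarith
        finally show ?thesis .
      qed
      have db: "degree (ev (brk k B u w)) \<le> n + m - 1"
        by (rule degree_drop[OF db0]) (simp add: cb Qb_top[OF dU dW])
      then show "inF 2 (n + m - 1) (brk k B u w)" by (simp add: inF_char)
      have e2: "n + m - 2 = (n + m - 1) - 1" by simp
      have nm1: "1 \<le> n + m - 1" using n m by simp
      have cb1: "coeff (ev (brk k B u w)) (n + m - 1) = smult (fact k) (coeff (pvbr n m p q) k)"
        by (simp only: cb Qb_sub[OF dU dW n m] cU cW pvbr_eq)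
      show "inF 2 (n + m - 2) (Sub (brk k B u w) (pact (smult (fact k) (coeff (pvbr n m p q) k)) (L0v (n + m - 2))))"
        unfolding e2 inF_char ev_Sub_pact[OF nm1] by (rule top_drop[OF db cb1])
    qed
  qed
  show ?thesis using partA partB by blast
qed


end
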